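(* Let $3\le n\le N$ and define the operators $\mathfrak a=\Theta_n(x)\nabla+\Lambda_n(x;2,1)I$ and $\mathfrak a^\dagger=\Theta_n(x)\nabla+\Lambda_n(x;1,2)I$, where $I$ is the identity operator. Then, as identities of rational functions of $x$, $$\mathfrak a\big(\mathbb K_n\big)(x)=\Theta_n(x)\nabla\mathbb K_n(x)+\Lambda_n(x;2,1)\mathbb K_n(x)=\Lambda_n(x;1,1)\,\mathbb K_{n-1}(x),$$ $$\mathfrak a^\dagger\big(\mathbb K_{n-1}\big)(x)=\Theta_n(x)\nabla\mathbb K_{n-1}(x)+\Lambda_n(x;1,2)\mathbb K_{n-1}(x)=\Lambda_n(x;2,2)\,\mathbb K_{n}(x).$$
   Context: Fix an integer $N\ge 1$ and $0<p<1$. Notation: $(a)_0=1$, $(a)_k=a(a+1)\cdots(a+k-1)$ (Pochhammer symbol); $[z]_0=1$, $[z]_k=z(z-1)\cdots(z-k+1)$ (falling factorial). For a function $f$, $\Delta f(x)=f(x+1)-f(x)$, $\nabla f(x)=f(x)-f(x-1)$, $\Delta^0$ is the identity and $\Delta^k=\Delta\circ\Delta^{k-1}$. For $0\le n\le N$ the monic Kravchuk polynomial is $K_n(x)=p^n(-N)_n\sum_{k=0}^{n}\frac{(-n)_k(-x)_k}{(-N)_k\,k!}p^{-k}$, and $K_{-1}=0$; these are monic of degree $n$ and orthogonal on $\{0,\dots,N\}$ with respect to the binomial weight $w(x)=\binom{N}{x}p^x(1-p)^{N-x}$, with $\|K_n\|^2=\sum_{x=0}^N K_n(x)^2w(x)=n!(-N)_np^n(p-1)^n$.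 They satisfy $xK_n=K_{n+1}+\alpha_nK_n+\beta_nK_{n-1}$ with $\alpha_n=p(N-n)+n(1-p)$, $\beta_n=np(1-p)(N-n+1)$. For $1\le n\le N+1$ and integers $i,l\ge0$, $\mathscr K_{n-1}^{(i,l)}(x,y)=\sum_{k=0}^{n-1}\frac{\Delta^iK_k(x)\,\Delta^lK_k(y)}{\|K_k\|^2}$. Fix $\lambda,\mu>0$ and an integer $j\ge 0$. On real polynomials define $\langle f,g\rangle_{\lambda,\mu}=\sum_{x=0}^N f(x)g(x)w(x)+\lambda\Delta^jf(0)\Delta^jg(0)+\mu\Delta^jf(N)\Delta^jg(N)$. For $0\le n\le N$, $\mathbb K_n=\mathbb K_n^{(j)}$ is the monic polynomial of degree $n$ with $\langle\mathbb K_n,q\rangle_{\lambda,\mu}=0$ for all polynomials $q$ of degree $<n$ (Kravchuk–Sobolev polynomials). For $1\le n\le N$: $\mathscr A_n(x,y)=\frac{j!}{\|K_{n-1}\|^2[x-y]_{j+1}}\sum_{k=0}^{j}\frac{\Delta^kK_{n-1}(y)}{k!}[x-y]_k$, $\mathscr B_n(x,y)=-\frac{j!}{\|K_{n-1}\|^2[x-y]_{j+1}}\sum_{k=0}^{j}\frac{\Delta^kK_{n}(y)}{k!}[x-y]_k$; $k_{00}=\mathscr K^{(j,j)}_{n-1}(0,0)$, $k_{0N}=\mathscr K^{(j,j)}_{n-1}(0,N)$, $k_{N0}=\mathscr K^{(j,j)}_{n-1}(N,0)$, $k_{NN}=\mathscr K^{(j,j)}_{n-1}(N,N)$, $d_0=\Delta^jK_n(0)$,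 $d_N=\Delta^jK_n(N)$, $\delta_n=(1+\lambda k_{00})(1+\mu k_{NN})-\lambda\mu k_{0N}k_{N0}$ (which is nonzero), $\Phi_1(n)=\frac{d_0(1+\mu k_{NN})-\mu k_{0N}d_N}{\delta_n}$, $\Phi_2(n)=\frac{(1+\lambda k_{00})d_N-\lambda k_{N0}d_0}{\delta_n}$; $\mathscr C_{1,n}(x)=1-\lambda\Phi_1(n)\mathscr A_n(x,0)-\mu\Phi_2(n)\mathscr A_n(x,N)$ and $\mathscr D_{1,n}(x)=-\lambda\Phi_1(n)\mathscr B_n(x,0)-\mu\Phi_2(n)\mathscr B_n(x,N)$. For $2\le m\le N$ define $\mathscr E_{1,m}(x)=x\nabla\mathscr C_{1,m}(x)+m\,\mathscr C_{1,m}(x-1)-\frac{(m-1)p(N-m+2)\mathscr D_{1,m}(x-1)}{\beta_{m-1}}$ and $\mathscr F_{1,m}(x)=x\nabla\mathscr D_{1,m}(x)+mp(N-m+1)\mathscr C_{1,m}(x-1)+\frac{(m-1)p(N-m+2)(x-\alpha_{m-1})\mathscr D_{1,m}(x-1)}{\beta_{m-1}}+(m-1)\mathscr D_{1,m}(x-1)$. For $3\le n\le N$ define $\mathscr C_{2,n}(x)=-\frac{\mathscr D_{1,n-1}(x)}{\beta_{n-1}}$, $\mathscr D_{2,n}(x)=\mathscr C_{1,n-1}(x)+\mathscr C_{2,n}(x)(\alpha_{n-1}-x)$, $\mathscr E_{2,n}(x)=-\frac{\mathscr F_{1,n-1}(x)}{\beta_{n-1}}$, $\mathscr F_{2,n}(x)=\mathscr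 E_{1,n-1}(x)+\mathscr E_{2,n}(x)(\alpha_{n-1}-x)$, and $\Theta_n(x)=x\big(\mathscr C_{1,n}(x)\mathscr D_{2,n}(x)-\mathscr C_{2,n}(x)\mathscr D_{1,n}(x)\big)$, $\Lambda_n(x;i,k)=(-1)^k\big(\mathscr E_{k,n}(x)\mathscr D_{i,n}(x)-\mathscr F_{k,n}(x)\mathscr C_{i,n}(x)\big)$ for $i,k\in\{1,2\}$. *)

theory Defs
  imports "HOL-Computational_Algebra.Polynomial"
begin

definition ffact :: "real \<Rightarrow> nat \<Rightarrow> real" where
  "ffact z k = (\<Prod>i<k. (z - real i))"

definition fdelta :: "(real \<Rightarrow> real) \<Rightarrow> real \<Rightarrow> real" where
  "fdelta f x = f (x + 1) - f x"

fun fdiff :: "nat \<Rightarrow> (real \<Rightarrow> real) \<Rightarrow> real \<Rightarrow> real" where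
  "fdiff 0 f = f"
| "fdiff (Suc k) f = fdelta (fdiff k f)"

definition bnabla :: "(real \<Rightarrow> real) \<Rightarrow> real \<Rightarrow> real" where
  "bnabla f x = f x - f (x - 1)"

definition wt :: "nat \<Rightarrow> real \<Rightarrow> nat \<Rightarrow> real" where
  "wt N p x = real (N choose x) * p ^ x * (1 - p) ^ (N - x)"

(* monic Kravchuk polynomial K_n(x) *)
definition Kr :: "nat \<Rightarrow> real \<Rightarrow> nat \<Rightarrow> real \<Rightarrow> real" where
  "Kr N p n x = p ^ n * pochhammer (- real N) n *
     (\<Sum>k=0..n. pochhammer (- real n) k * pochhammer (- x) k
        / (pochhammer (- real N) k * fact k) * p powi (- int k))"

definition knorm :: "nat \<Rightarrow> real \<Rightarrow> nat \<Rightarrow> real" where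
  "knorm N p n = (\<Sum>x=0..N. (Kr N p n (real x))\<^sup>2 * wt N p x)"

definition alpha :: "nat \<Rightarrow> real \<Rightarrow> nat \<Rightarrow> real" where
  "alpha N p n = p * (real N - real n) + real n * (1 - p)"

definition beta :: "nat \<Rightarrow> real \<Rightarrow> nat \<Rightarrow> real" where
  "beta N p n = real n * p * (1 - p) * (real N - real n + 1)"

definition Kker :: "nat \<Rightarrow> real \<Rightarrow> nat \<Rightarrow> nat \<Rightarrow> nat \<Rightarrow> real \<Rightarrow> real \<Rightarrow> real" where
  "Kker N p i l m x y =
     (\<Sum>k=0..m. fdiff i (Kr N p k) x * fdiff l (Kr N p k) y / knorm N p k)"

definition sob_ip :: "nat \<Rightarrow> real \<Rightarrow> real \<Rightarrow> real \<Rightarrow> nat \<Rightarrow> real poly \<Rightarrow> real poly \<Rightarrow> real" where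
  "sob_ip N p lam mu j f g =
     (\<Sum>x=0..N. poly f (real x) * poly g (real x) * wt N p x)
     + lam * fdiff j (poly f) 0 * fdiff j (poly g) 0
     + mu * fdiff j (poly f) (real N) * fdiff j (poly g) (real N)"

definition KS :: "nat \<Rightarrow> real \<Rightarrow> real \<Rightarrow> real \<Rightarrow> nat \<Rightarrow> nat \<Rightarrow> real poly" where
  "KS N p lam mu j n = (THE P. degree P = n \<and> lead_coeff P = 1 \<and>
       (\<forall>q. degree q < n \<longrightarrow> sob_ip N p lam mu j P q = 0))"

definition An :: "nat \<Rightarrow> real \<Rightarrow> nat \<Rightarrow> nat \<Rightarrow> real \<Rightarrow> real \<Rightarrow> real" where
  "An N p j n x y = fact j / (knorm N p (n - 1) * ffact (x - y) (j + 1)) *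
     (\<Sum>k=0..j. fdiff k (Kr N p (n - 1)) y / fact k * ffact (x - y) k)"

definition Bn :: "nat \<Rightarrow> real \<Rightarrow> nat \<Rightarrow> nat \<Rightarrow> real \<Rightarrow> real \<Rightarrow> real" where
  "Bn N p j n x y = - (fact j / (knorm N p (n - 1) * ffact (x - y) (j + 1))) *
     (\<Sum>k=0..j. fdiff k (Kr N p n) y / fact k * ffact (x - y) k)"

definition deltan :: "nat \<Rightarrow> real \<Rightarrow> real \<Rightarrow> real \<Rightarrow> nat \<Rightarrow> nat \<Rightarrow> real" where
  "deltan N p lam mu j n =
     (1 + lam * Kker N p j j (n - 1) 0 0) * (1 + mu * Kker N p j j (n - 1) (real N) (real N))
     - lam * mu * Kker N p j j (n - 1) 0 (real N) * Kker N p j j (n - 1) (real N) 0"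

definition Phi1 :: "nat \<Rightarrow> real \<Rightarrow> real \<Rightarrow> real \<Rightarrow> nat \<Rightarrow> nat \<Rightarrow> real" where
  "Phi1 N p lam mu j n =
     (fdiff j (Kr N p n) 0 * (1 + mu * Kker N p j j (n - 1) (real N) (real N))
      - mu * Kker N p j j (n - 1) 0 (real N) * fdiff j (Kr N p n) (real N))
     / deltan N p lam mu j n"

definition Phi2 :: "nat \<Rightarrow> real \<Rightarrow> real \<Rightarrow> real \<Rightarrow> nat \<Rightarrow> nat \<Rightarrow> real" where
  "Phi2 N p lam mu j n =
     ((1 + lam * Kker N p j j (n - 1) 0 0) * fdiff j (Kr N p n) (real N)
      - lam * Kker N p j j (n - 1) (real N) 0 * fdiff j (Kr N p n) 0)
     / deltan N p lam mu j n"

definition C1 :: "nat \<Rightarrow> real \<Rightarrow> real \<Rightarrow> real \<Rightarrow> nat \<Rightarrow> nat \<Rightarrow> real \<Rightarrow> real" where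
  "C1 N p lam mu j n x = 1 - lam * Phi1 N p lam mu j n * An N p j n x 0
                           - mu * Phi2 N p lam mu j n * An N p j n x (real N)"

definition D1 :: "nat \<Rightarrow> real \<Rightarrow> real \<Rightarrow> real \<Rightarrow> nat \<Rightarrow> nat \<Rightarrow> real \<Rightarrow> real" where
  "D1 N p lam mu j n x = - lam * Phi1 N p lam mu j n * Bn N p j n x 0
                         - mu * Phi2 N p lam mu j n * Bn N p j n x (real N)"

definition E1 :: "nat \<Rightarrow> real \<Rightarrow> real \<Rightarrow> real \<Rightarrow> nat \<Rightarrow> nat \<Rightarrow> real \<Rightarrow> real" where
  "E1 N p lam mu j m x = x * bnabla (C1 N p lam mu j m) x + real m * C1 N p lam mu j m (x - 1)
     - (real m - 1) * p * (real N - real m + 2) * D1 N p lam mu j m (x - 1) / beta N p (m - 1)"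

definition F1 :: "nat \<Rightarrow> real \<Rightarrow> real \<Rightarrow> real \<Rightarrow> nat \<Rightarrow> nat \<Rightarrow> real \<Rightarrow> real" where
  "F1 N p lam mu j m x = x * bnabla (D1 N p lam mu j m) x
     + real m * p * (real N - real m + 1) * C1 N p lam mu j m (x - 1)
     + (real m - 1) * p * (real N - real m + 2) * (x - alpha N p (m - 1)) * D1 N p lam mu j m (x - 1)
         / beta N p (m - 1)
     + (real m - 1) * D1 N p lam mu j m (x - 1)"

definition C2 :: "nat \<Rightarrow> real \<Rightarrow> real \<Rightarrow> real \<Rightarrow> nat \<Rightarrow> nat \<Rightarrow> real \<Rightarrow> real" where
  "C2 N p lam mu j n x = - D1 N p lam mu j (n - 1) x / beta N p (n - 1)"

definition D2 :: "nat \<Rightarrow> real \<Rightarrow> real \<Rightarrow> real \<Rightarrow> nat \<Rightarrow> nat \<Rightarrow> real \<Rightarrow> real" where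
  "D2 N p lam mu j n x = C1 N p lam mu j (n - 1) x + C2 N p lam mu j n x * (alpha N p (n - 1) - x)"

definition E2 :: "nat \<Rightarrow> real \<Rightarrow> real \<Rightarrow> real \<Rightarrow> nat \<Rightarrow> nat \<Rightarrow> real \<Rightarrow> real" where
  "E2 N p lam mu j n x = - F1 N p lam mu j (n - 1) x / beta N p (n - 1)"

definition F2 :: "nat \<Rightarrow> real \<Rightarrow> real \<Rightarrow> real \<Rightarrow> nat \<Rightarrow> nat \<Rightarrow> real \<Rightarrow> real" where
  "F2 N p lam mu j n x = E1 N p lam mu j (n - 1) x + E2 N p lam mu j n x * (alpha N p (n - 1) - x)"

definition Cf :: "nat \<Rightarrow> real \<Rightarrow> real \<Rightarrow> real \<Rightarrow> nat \<Rightarrow> nat \<Rightarrow> nat \<Rightarrow> real \<Rightarrow> real" where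
  "Cf N p lam mu j i n x = (if i = 1 then C1 N p lam mu j n x else C2 N p lam mu j n x)"
definition Df :: "nat \<Rightarrow> real \<Rightarrow> real \<Rightarrow> real \<Rightarrow> nat \<Rightarrow> nat \<Rightarrow> nat \<Rightarrow> real \<Rightarrow> real" where
  "Df N p lam mu j i n x = (if i = 1 then D1 N p lam mu j n x else D2 N p lam mu j n x)"
definition Ef :: "nat \<Rightarrow> real \<Rightarrow> real \<Rightarrow> real \<Rightarrow> nat \<Rightarrow> nat \<Rightarrow> nat \<Rightarrow> real \<Rightarrow> real" where
  "Ef N p lam mu j i n x = (if i = 1 then E1 N p lam mu j n x else E2 N p lam mu j n x)"
definition Ff :: "nat \<Rightarrow> real \<Rightarrow> real \<Rightarrow> real \<Rightarrow> nat \<Rightarrow> nat \<Rightarrow> nat \<Rightarrow> real \<Rightarrow> real" where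
  "Ff N p lam mu j i n x = (if i = 1 then F1 N p lam mu j n x else F2 N p lam mu j n x)"

definition Theta :: "nat \<Rightarrow> real \<Rightarrow> real \<Rightarrow> real \<Rightarrow> nat \<Rightarrow> nat \<Rightarrow> real \<Rightarrow> real" where
  "Theta N p lam mu j n x = x * (C1 N p lam mu j n x * D2 N p lam mu j n x
                                 - C2 N p lam mu j n x * D1 N p lam mu j n x)"

definition Lam :: "nat \<Rightarrow> real \<Rightarrow> real \<Rightarrow> real \<Rightarrow> nat \<Rightarrow> nat \<Rightarrow> real \<Rightarrow> nat \<Rightarrow> nat \<Rightarrow> real" where
  "Lam N p lam mu j n x i k = (-1) ^ k * (Ef N p lam mu j k n x * Df N p lam mu j i n x
                                        - Ff N p lam mu j k n x * Cf N p lam mu j i n x)"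

end

theory Submission
  imports Defs
begin

lemma ffact_0[simp]: "ffact z 0 = 1" by (simp add: ffact_def)
lemma ffact_Suc: "ffact z (Suc k) = ffact z k * (z - real k)"
  by (simp add: ffact_def lessThan_Suc mult.commute)

lemma ffact_add: "ffact z (a + b) = ffact z a * ffact (z - real a) b"
  by (induction b) (simp_all add: ffact_Suc algebra_simps)

lemma ffact_Suc': "ffact z (Suc k) = z * ffact (z - 1) k"
  using ffact_add[of z 1 k] by (simp add: ffact_def)

lemma poch_neg_ffact: "pochhammer (- z) k = (-1)^k * ffact z k"
  by (induction k) (simp_all add: pochhammer_Suc ffact_Suc algebra_simps)

lemma binom_ffact: "real (n choose k) = ffact (real n) k / fact k"
  by (simp add: binomial_gbinomial gbinomial_pochhammer poch_neg_ffact)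

lemma ffact_nat_nz: "k \<le> N \<Longrightarrow> ffact (real N) k \<noteq> 0"
  by (induction k) (simp_all add: ffact_Suc)

definition cf :: "nat \<Rightarrow> real \<Rightarrow> nat \<Rightarrow> nat \<Rightarrow> real" where
  "cf N p n k = real (n choose k) * (-p)^(n-k) * ffact (real N - real k) (n-k)"

lemma Kr_ff:
  assumes "n \<le> N" "p \<noteq> 0"
  shows "Kr N p n x = (\<Sum>k=0..n. cf N p n k * ffact x k)"
  unfolding Kr_def sum_distrib_left
proof (rule sum.cong[OF refl])
  fix k assume "k \<in> {0..n}"
  then obtain d where n: "n = k + d" by (auto simp: le_iff_add)
  have fN: "ffact (real N) k \<noteq> 0" using assms n by (intro ffact_nat_nz) auto
  have fNn: "ffact (real N) n = ffact (real N) k * ffact (real N - real k) d"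
    using ffact_add[of "real N" k d] n by simp
  have bn: "real (n choose k) = ffact (real n) k / fact k" by (rule binom_ffact)
  have pw: "p powi (- int k) = 1 / p^k" by (simp add: power_int_minus field_simps)
  show "p ^ n * pochhammer (- real N) n *
         (pochhammer (- real n) k * pochhammer (- x) k / (pochhammer (- real N) k * fact k) *
          p powi - int k) = cf N p n k * ffact x k"
    unfolding poch_neg_ffact cf_def bn pw fNn using fN assms(2)
    by (simp add: n power_add power_minus[of p] field_simps)
qed

lemma cancel_l: "(a::real) \<noteq> 0 \<Longrightarrow> a * x = a * y \<Longrightarrow> x = y" by simp

lemma B1: "Suc k * (n choose Suc k) = (n - k) * (n choose k)"
  using binomial_absorption[of k n] binomial_absorb_comp[of n k] by simp
lemma ffact_1[simp]: "ffact z (Suc 0) = z" by (simp add: ffact_Suc)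
lemma cf_gt: "n < k \<Longrightarrow> cf N p n k = 0" by (simp add: cf_def)
lemma cf_nn[simp]: "cf N p n n = 1" by (simp add: cf_def)

lemma lower_coef:
  assumes "1 \<le> n" "k \<le> n"
  shows "real k * cf N p n k = real n * cf N p n k + real n * p * (real N - real n + 1) * cf N p (n-1) k"
proof (cases "k = n")
  case True then show ?thesis using assms by (simp add: cf_gt)
next
  case False
  then have "k < n" using assms by simp
  then obtain d where n: "n = k + Suc d" using less_iff_Suc_add by (auto simp: add.commute)
  have b: "real (n choose k) = real n * real ((n-1) choose k) / real (Suc d)"
  proof -
    have "real (n - k) * real (n choose k) = real n * real ((n-1) choose k)"
      using binomial_absorb_comp[of n k] by (metis of_nat_mult)
    then show ?thesis using n by (simp add: field_simps)
  qed
  have nk: "n - k = Suc d" using n by simp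
  have e: "real N - real k - real d = real N - real n + 1" using n by simp
  have c1: "cf N p n k = real n * real ((n-1) choose k) / real (Suc d) * (-p)^(Suc d) * (ffact (real N - real k) d * (real N - real n + 1))"
    unfolding cf_def b using e by (simp add: nk ffact_Suc)
  have c2: "cf N p (n-1) k = real ((n-1) choose k) * (-p)^d * ffact (real N - real k) d"
    unfolding cf_def using n by simp
  show ?thesis unfolding c1 c2 using n
    by (simp add: field_simps)
qed

lemma Leig_coef:
  "cf N p n (Suc i) * p * real (Suc i) * (real N - real i) = - (real n - real i) * cf N p n i"
proof (cases "i < n")
  case False then show ?thesis
    by (cases "i = n") (simp_all add: cf_gt)
next
  case True
  then obtain d where n: "n = i + Suc d" using less_iff_Suc_add by (auto simp: add.commute)
  have nk: "n - i = Suc d" "n - Suc i = d" using n by simp_all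
  have b: "real (n choose Suc i) = real (Suc d) * real (n choose i) / real (Suc i)"
  proof -
    have "real (Suc i) * real (n choose Suc i) = real (n - i) * real (n choose i)"
      using B1[of i n] by (metis of_nat_mult)
    then show ?thesis using nk by (simp add: field_simps)
  qed
  have f: "ffact (real N - real i) (Suc d) = (real N - real i) * ffact (real N - real (Suc i)) d"
    by (simp add: ffact_Suc' algebra_simps)
  have c1: "cf N p n (Suc i) = real (Suc d) * real (n choose i) / real (Suc i) * (-p)^d * ffact (real N - real (Suc i)) d"
    unfolding cf_def b nk by simp
  have c2: "cf N p n i = real (n choose i) * (-p)^(Suc d) * ((real N - real i) * ffact (real N - real (Suc i)) d)"
    unfolding cf_def nk f by simp
  have e: "real n - real i = real (Suc d)" using n by simp
  show ?thesis unfolding c1 c2 e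
    by (simp add: field_simps)
qed

lemma rec_coef:
  assumes "k \<le> Suc n"
  shows "(if k = 0 then 0 else cf N p n (k-1)) + real k * cf N p n k
    = cf N p (Suc n) k + alpha N p n * cf N p n k + beta N p n * cf N p (n-1) k"
proof -
  consider "k = Suc n" | "k = n" | "k < n" using assms by linarith
  then show ?thesis
  proof cases
    case 1 then show ?thesis by (simp add: cf_gt)
  next
    case 2
    show ?thesis
    proof (cases n)
      case 0 then show ?thesis using 2 by (simp add: cf_def alpha_def beta_def)
    next
      case (Suc m)
      have a: "cf N p n (n-1) = real n * (-p) * (real N - real n + 1)"
        using Suc by (simp add: cf_def)
      have b: "cf N p (Suc n) n = real (Suc n) * (-p) * (real N - real n)"
        by (simp add: cf_def)
      have c: "cf N p (n-1) n = 0" using Suc by (simp add: cf_gt)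
      show ?thesis using 2 Suc a b c by (simp add: alpha_def beta_def algebra_simps)
    qed
  next
    case 3
    then obtain d where n: "n = k + Suc d" using less_iff_Suc_add by (auto simp: add.commute)
    have nk: "n - k = Suc d" "Suc n - k = Suc (Suc d)" "n - 1 - k = d" using n by simp_all
    have nr: "real n = real k + real d + 1" using n by simp
    define Y where "Y = real (n choose k) / ((real d + 2) * (real k + real d + 1))"
    have pz: "(real d + 2) * (real k + real d + 1) \<noteq> 0" by (simp add: add_nonneg_pos)
    have X0: "real (n choose k) = Y * ((real d + 2) * (real k + real d + 1))"
      unfolding Y_def using pz by simp
    have X1: "real (Suc n choose k) = Y * (real k + real d + 1) * (real k + real d + 2)"
    proof -
      have "real (Suc n - k) * real (Suc n choose k) = real (Suc n) * real (n choose k)"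
        using binomial_absorb_comp[of "Suc n" k] by (metis of_nat_mult diff_Suc_1)
      then have "(real d + 2) * real (Suc n choose k) = (real d + 2) * (Y * (real k + real d + 1) * (real k + real d + 2))"
        using nk nr X0 by (simp add: algebra_simps)
      then show ?thesis by (rule cancel_l[rotated]) simp
    qed
    have X2: "real ((n-1) choose k) = Y * (real d + 1) * (real d + 2)"
    proof -
      have "real (n - k) * real (n choose k) = real n * real ((n-1) choose k)"
        using binomial_absorb_comp[of n k] by (metis of_nat_mult)
      then have "(real k + real d + 1) * real ((n-1) choose k) = (real k + real d + 1) * (Y * (real d + 1) * (real d + 2))"
        using nk nr X0 by (simp add: algebra_simps)
      then show ?thesis by (rule cancel_l[rotated]) (simp add: add_nonneg_pos)
    qed
    define F where "F = ffact (real N - real k) d"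
    define Q where "Q = (-p)^d"
    have c1: "cf N p n k = Y * (real d + 2) * (real k + real d + 1) * (-p*Q) * (F * (real N - real k - real d))"
      unfolding cf_def X0 F_def Q_def nk by (simp add: ffact_Suc)
    have c2: "cf N p (Suc n) k = Y * (real k + real d + 1) * (real k + real d + 2) * (p*p*Q) * (F * (real N - real k - real d) * (real N - real k - (real d + 1)))"
      unfolding cf_def X1 F_def Q_def nk by (simp add: ffact_Suc)
    have c3: "cf N p (n-1) k = Y * (real d + 1) * (real d + 2) * Q * F"
      unfolding cf_def X2 F_def Q_def nk by simp
    have c0: "(if k = 0 then 0 else cf N p n (k-1)) = (Y*real k*(real k + real d+1)) * (p*p*Q) * ((real N - real k + 1) * (F * (real N - real k - real d)))"
    proof (cases k)
      case 0 then show ?thesis by simp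
    next
      case (Suc i)
      have ni: "n - i = Suc (Suc d)" using n Suc by simp
      have b: "real (n choose i) = Y*real k*(real k + real d+1)"
      proof -
        have "real (Suc i) * real (n choose Suc i) = real (n - i) * real (n choose i)"
          using B1[of i n] by (metis of_nat_mult)
        then have "(real d + 2) * real (n choose i) = (real d + 2) * (Y*real k*(real k + real d+1))"
          using ni Suc X0 by (simp add: algebra_simps)
        then show ?thesis by (rule cancel_l[rotated]) simp
      qed
      have f: "ffact (real N - real i) (Suc (Suc d)) = (real N - real k + 1) * (F * (real N - real k - real d))"
      proof -
        have "ffact (real N - real i) (Suc (Suc d)) = (real N - real i) * ffact (real N - real i - 1) (Suc d)"
          by (rule ffact_Suc')
        also have "\<dots> = (real N - real i) * (ffact (real N - real i - 1) d * (real N - real i - 1 - real d))"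
          by (simp only: ffact_Suc)
        finally show ?thesis unfolding F_def using Suc by (simp add: algebra_simps)
      qed
      show ?thesis using Suc by (simp add: cf_def ni b f Q_def)
    qed
    show ?thesis unfolding c0 c1 c2 c3 alpha_def beta_def nr
      by algebra
  qed
qed

lemma Kr_ffM:
  assumes "n \<le> N" "p \<noteq> 0" "n \<le> M"
  shows "Kr N p n x = (\<Sum>k=0..M. cf N p n k * ffact x k)"
  unfolding Kr_ff[OF assms(1,2)]
  by (rule sum.mono_neutral_left) (use assms in \<open>auto simp: cf_gt\<close>)

lemma ff_nabla: "x * (ffact x k - ffact (x-1) k) = real k * ffact x k"
proof (cases k)
  case (Suc i)
  have h1: "ffact x (Suc i) = x * ffact (x-1) i" by (rule ffact_Suc')
  have h2: "ffact (x-1) (Suc i) = ffact (x-1) i * (x - 1 - real i)" by (rule ffact_Suc)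
  show ?thesis unfolding Suc h1 h2 by (simp add: algebra_simps)
qed simp

lemma Kr_lower:
  assumes "1 \<le> n" "n \<le> N" "p \<noteq> 0"
  shows "x * (Kr N p n x - Kr N p n (x-1)) = real n * Kr N p n x + real n * p * (real N - real n + 1) * Kr N p (n-1) x"
proof -
  have "x * (Kr N p n x - Kr N p n (x-1)) = (\<Sum>k=0..n. cf N p n k * (x * (ffact x k - ffact (x-1) k)))"
    unfolding Kr_ff[OF assms(2,3)] by (simp add: sum_distrib_left sum_subtractf algebra_simps)
  also have "\<dots> = (\<Sum>k=0..n. (real k * cf N p n k) * ffact x k)"
    by (simp only: ff_nabla mult.commute mult.left_commute mult.assoc)
  also have "\<dots> = (\<Sum>k=0..n. (real n * cf N p n k + real n * p * (real N - real n + 1) * cf N p (n-1) k) * ffact x k)"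
    using assms by (intro sum.cong refl) (simp add: lower_coef)
  also have "\<dots> = real n * Kr N p n x + real n * p * (real N - real n + 1) * Kr N p (n-1) x"
  proof -
    have e2: "Kr N p (n-1) x = (\<Sum>k=0..n. cf N p (n-1) k * ffact x k)" by (rule Kr_ffM) (use assms in auto)
    show ?thesis unfolding Kr_ff[OF assms(2,3)] e2 sum_distrib_left sum.distrib[symmetric]
      by (rule sum.cong[OF refl]) (simp add: algebra_simps)
  qed
  finally show ?thesis .
qed

lemma Kr_rec:
  assumes "Suc n \<le> N" "p \<noteq> 0"
  shows "x * Kr N p n x = Kr N p (Suc n) x + alpha N p n * Kr N p n x + beta N p n * Kr N p (n-1) x"
proof -
  have nN: "n \<le> N" using assms by simp
  have "x * Kr N p n x = (\<Sum>k=0..n. cf N p n k * ffact x (Suc k)) + (\<Sum>k=0..n. real k * cf N p n k * ffact x k)"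
    unfolding Kr_ff[OF nN assms(2)] by (simp add: sum_distrib_left ffact_Suc sum.distrib[symmetric] algebra_simps)
  also have "(\<Sum>k=0..n. cf N p n k * ffact x (Suc k)) = (\<Sum>k=0..Suc n. (if k = 0 then 0 else cf N p n (k-1)) * ffact x k)"
    by (subst sum.atLeast0_atMost_Suc_shift) simp
  also have "(\<Sum>k=0..n. real k * cf N p n k * ffact x k) = (\<Sum>k=0..Suc n. real k * cf N p n k * ffact x k)"
    by (simp add: cf_gt)
  also have "(\<Sum>k=0..Suc n. (if k = 0 then 0 else cf N p n (k-1)) * ffact x k) + (\<Sum>k=0..Suc n. real k * cf N p n k * ffact x k)
     = (\<Sum>k=0..Suc n. (cf N p (Suc n) k + alpha N p n * cf N p n k + beta N p n * cf N p (n-1) k) * ffact x k)"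
    unfolding sum.distrib[symmetric]
  proof (intro sum.cong refl)
    fix k assume "k \<in> {0..Suc n}"
    then have "k \<le> Suc n" by simp
    from arg_cong[OF rec_coef[OF this, of N p], of "\<lambda>t. t * ffact x k"]
    show "(if k = 0 then 0 else cf N p n (k - 1)) * ffact x k + real k * cf N p n k * ffact x k =
         (cf N p (Suc n) k + alpha N p n * cf N p n k + beta N p n * cf N p (n - 1) k) * ffact x k"
      by (simp add: algebra_simps)
  qed
  also have "\<dots> = Kr N p (Suc n) x + alpha N p n * Kr N p n x + beta N p n * Kr N p (n-1) x"
  proof -
    have e1: "Kr N p n x = (\<Sum>k=0..Suc n. cf N p n k * ffact x k)" by (rule Kr_ffM) (use assms in auto)
    have e2: "Kr N p (n-1) x = (\<Sum>k=0..Suc n. cf N p (n-1) k * ffact x k)" by (rule Kr_ffM) (use assms in auto)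
    show ?thesis unfolding Kr_ff[OF assms] e1 e2
      by (simp only: sum_distrib_left sum.distrib[symmetric] algebra_simps)
  qed
  finally show ?thesis .
qed

definition Lop :: "nat \<Rightarrow> real \<Rightarrow> (real \<Rightarrow> real) \<Rightarrow> real \<Rightarrow> real" where
  "Lop N p f x = p * (real N - x) * (f (x+1) - f x) - (1-p) * x * (f x - f (x-1))"

lemma Lop_ff: "Lop N p (\<lambda>y. ffact y k) x =
   (if k = 0 then 0 else p * real k * (real N - real (k-1)) * ffact x (k-1)) - real k * ffact x k"
proof (cases k)
  case 0 then show ?thesis by (simp add: Lop_def)
next
  case (Suc i)
  have a: "ffact (x+1) (Suc i) = (x+1) * ffact x i" using ffact_Suc'[of "x+1" i] by simp
  have b: "ffact x (Suc i) = ffact x i * (x - real i)" by (rule ffact_Suc)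
  have c: "x * (ffact x (Suc i) - ffact (x-1) (Suc i)) = real (Suc i) * ffact x (Suc i)" by (rule ff_nabla)
  have "Lop N p (\<lambda>y. ffact y k) x = p * (real N - x) * (ffact (x+1) (Suc i) - ffact x (Suc i)) - (1-p) * (x * (ffact x (Suc i) - ffact (x-1) (Suc i)))"
    unfolding Lop_def Suc by (simp add: mult.assoc)
  also have "\<dots> = p * (real N - x) * ((x+1) * ffact x i - ffact x i * (x - real i)) - (1-p) * (real (Suc i) * (ffact x i * (x - real i)))"
    unfolding c unfolding a b ..
  finally have "Lop N p (\<lambda>y. ffact y k) x = p * (real N - x) * ((x+1) * ffact x i - ffact x i * (x - real i)) - (1-p) * (real (Suc i) * (ffact x i * (x - real i)))" .
  then show ?thesis using Suc by (simp add: b algebra_simps)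
qed

lemma Lop_sum: "Lop N p (\<lambda>y. \<Sum>k\<in>A. c k * f k y) x = (\<Sum>k\<in>A. c k * Lop N p (f k) x)"
proof -
  have 1: "(\<Sum>k\<in>A. c k * f k (x+1)) - (\<Sum>k\<in>A. c k * f k x) = (\<Sum>k\<in>A. c k * (f k (x+1) - f k x))"
    by (simp add: sum_subtractf right_diff_distrib)
  have 2: "(\<Sum>k\<in>A. c k * f k x) - (\<Sum>k\<in>A. c k * f k (x-1)) = (\<Sum>k\<in>A. c k * (f k x - f k (x-1)))"
    by (simp add: sum_subtractf right_diff_distrib)
  have "Lop N p (\<lambda>y. \<Sum>k\<in>A. c k * f k y) x = p * (real N - x) * (\<Sum>k\<in>A. c k * (f k (x+1) - f k x)) - (1-p) * x * (\<Sum>k\<in>A. c k * (f k x - f k (x-1)))"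
    unfolding Lop_def 1 2 ..
  also have "\<dots> = (\<Sum>k\<in>A. p * (real N - x) * (c k * (f k (x+1) - f k x))) - (\<Sum>k\<in>A. (1-p) * x * (c k * (f k x - f k (x-1))))"
    by (simp add: sum_distrib_left)
  also have "\<dots> = (\<Sum>k\<in>A. c k * Lop N p (f k) x)"
    unfolding sum_subtractf[symmetric] by (rule sum.cong) (simp_all add: Lop_def algebra_simps)
  finally show ?thesis .
qed

lemma Kr_Leig:
  assumes "n \<le> N" "p \<noteq> 0"
  shows "Lop N p (Kr N p n) x = - real n * Kr N p n x"
proof -
  have e: "Kr N p n = (\<lambda>y. \<Sum>k=0..Suc n. cf N p n k * ffact y k)"
    by (rule ext) (rule Kr_ffM[OF assms], simp)
  have "Lop N p (Kr N p n) x = Lop N p (\<lambda>y. \<Sum>k=0..Suc n. cf N p n k * ffact y k) x"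
    by (simp only: e)
  also have "\<dots> = (\<Sum>k=0..Suc n. cf N p n k * Lop N p (\<lambda>y. ffact y k) x)"
    by (rule Lop_sum)
  also have "\<dots> = (\<Sum>k=0..Suc n. cf N p n k * (if k = 0 then 0 else p * real k * (real N - real (k-1)) * ffact x (k-1)))
       - (\<Sum>k=0..Suc n. real k * cf N p n k * ffact x k)"
    by (simp add: Lop_ff sum_subtractf algebra_simps)
  also have "(\<Sum>k=0..Suc n. cf N p n k * (if k = 0 then 0 else p * real k * (real N - real (k-1)) * ffact x (k-1)))
     = (\<Sum>i=0..n. cf N p n (Suc i) * p * real (Suc i) * (real N - real i) * ffact x i)"
    by (subst sum.atLeast0_atMost_Suc_shift) (simp add: algebra_simps)
  also have "\<dots> = (\<Sum>i=0..n. - (real n - real i) * cf N p n i * ffact x i)"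
    by (rule sum.cong[OF refl]) (simp only: Leig_coef)
  also have "(\<Sum>k=0..Suc n. real k * cf N p n k * ffact x k) = (\<Sum>k=0..n. real k * cf N p n k * ffact x k)"
    by (simp add: cf_gt)
  finally show ?thesis
    unfolding Kr_ff[OF assms] by (simp add: sum_distrib_left sum_subtractf[symmetric] algebra_simps)
qed


definition ipw :: "nat \<Rightarrow> real \<Rightarrow> (real \<Rightarrow> real) \<Rightarrow> (real \<Rightarrow> real) \<Rightarrow> real" where
  "ipw N p f g = (\<Sum>x=0..N. f (real x) * g (real x) * wt N p x)"

lemma ipw_sym: "ipw N p f g = ipw N p g f"
  unfolding ipw_def by (simp add: mult.commute mult.left_commute)

lemma pearson:
  assumes "x < N"
  shows "(1-p) * real (Suc x) * wt N p (Suc x) = p * (real N - real x) * wt N p x"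
proof -
  obtain d where d: "N - x = Suc d" using assms by (metis Suc_diff_Suc)
  have d2: "N - Suc x = d" using d by simp
  have b: "real (Suc x) * real (N choose Suc x) = real (N - x) * real (N choose x)"
    using B1[of x N] by (metis of_nat_mult)
  have nx: "real (N - x) = real N - real x" using assms by simp
  have "(1-p) * real (Suc x) * wt N p (Suc x) = p^(Suc x) * (1-p)^(Suc d) * (real (Suc x) * real (N choose Suc x))"
    unfolding wt_def d2 by (simp add: algebra_simps)
  also have "\<dots> = p^(Suc x) * (1-p)^(Suc d) * (real (N - x) * real (N choose x))"
    by (simp only: b)
  also have "\<dots> = p * (real N - real x) * wt N p x"
  proof -
    have dd: "real N = real x + real d + 1" using d assms by linarith
    show ?thesis unfolding wt_def d nx by (simp add: dd algebra_simps)
  qed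
  finally show ?thesis .
qed

lemma selfadj:
  assumes "N = Suc M"
  shows "ipw N p (Lop N p f) g = - (\<Sum>x=0..M. p * (real N - real x) * wt N p x * (f (real x + 1) - f (real x)) * (g (real x + 1) - g (real x)))"
proof -
  define a where "a x = p * (real N - real x) * wt N p x" for x
  have "ipw N p (Lop N p f) g = (\<Sum>x=0..N. a x * (f (real x + 1) - f (real x)) * g (real x))
      - (\<Sum>x=0..N. (1-p) * real x * wt N p x * (f (real x) - f (real x - 1)) * g (real x))"
    unfolding ipw_def sum_subtractf[symmetric] by (rule sum.cong[OF refl]) (simp add: Lop_def a_def algebra_simps)
  also have "(\<Sum>x=0..N. a x * (f (real x + 1) - f (real x)) * g (real x)) = (\<Sum>x=0..M. a x * (f (real x + 1) - f (real x)) * g (real x))"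
    using assms by (simp add: a_def)
  also have "(\<Sum>x=0..N. (1-p) * real x * wt N p x * (f (real x) - f (real x - 1)) * g (real x))
     = (\<Sum>x=0..M. a x * (f (real x + 1) - f (real x)) * g (real x + 1))"
    unfolding assms
  proof (subst sum.atLeast0_atMost_Suc_shift, simp, rule sum.cong[OF refl])
    fix x assume "x \<in> {0..M}"
    then have "x < N" using assms by simp
    have pe: "(1 - p) * (1 + real x) * wt (Suc M) p (Suc x) = a x"
      using pearson[OF \<open>x < N\<close>, of p] assms by (simp add: a_def add.commute)
    show "(1 - p) * (1 + real x) * wt (Suc M) p (Suc x) * (f (1 + real x) - f (real x)) * g (1 + real x) =
          a x * (f (real x + 1) - f (real x)) * g (real x + 1)"
      unfolding pe by (simp add: add.commute)
  qed
  finally have e: "ipw N p (Lop N p f) g = (\<Sum>x=0..M. a x * (f (real x + 1) - f (real x)) * g (real x) - a x * (f (real x + 1) - f (real x)) * g (real x + 1))"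
    unfolding sum_subtractf .
  show ?thesis unfolding e sum_negf[symmetric] a_def
    by (rule sum.cong[OF refl]) (simp add: algebra_simps)
qed

lemma Kr_orth:
  assumes "n \<le> N" "l \<le> N" "n \<noteq> l" "p \<noteq> 0" "1 \<le> N"
  shows "ipw N p (Kr N p n) (Kr N p l) = 0"
proof -
  obtain M where M: "N = Suc M" using assms(5) by (cases N) auto
  have e1: "ipw N p (Lop N p (Kr N p n)) (Kr N p l) = - real n * ipw N p (Kr N p n) (Kr N p l)"
    unfolding ipw_def Kr_Leig[OF assms(1,4)] sum_distrib_left by (simp add: algebra_simps)
  have e2: "ipw N p (Lop N p (Kr N p l)) (Kr N p n) = - real l * ipw N p (Kr N p l) (Kr N p n)"
    unfolding ipw_def Kr_Leig[OF assms(2,4)] sum_distrib_left by (simp add: algebra_simps)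
  have "ipw N p (Lop N p (Kr N p n)) (Kr N p l) = ipw N p (Lop N p (Kr N p l)) (Kr N p n)"
    unfolding selfadj[OF M] by (simp add: algebra_simps)
  then have "real n * ipw N p (Kr N p n) (Kr N p l) = real l * ipw N p (Kr N p n) (Kr N p l)"
    using e1 e2 ipw_sym[of N p "Kr N p l"] by simp
  then show ?thesis using assms(3) by simp
qed

fun FFp :: "nat \<Rightarrow> real poly" where
  "FFp 0 = 1"
| "FFp (Suc k) = FFp k * [:- real k, 1:]"

lemma poly_FFp: "poly (FFp k) x = ffact x k"
  by (induction k) (simp_all add: ffact_Suc algebra_simps)

lemma FFp_deg: "degree (FFp k) = k \<and> coeff (FFp k) k = 1"
proof (induction k)
  case (Suc k)
  then have dk: "degree (FFp k) = k" and lk: "coeff (FFp k) k = 1" by auto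
  then have nz: "FFp k \<noteq> 0" by auto
  have d: "degree (FFp k * [:- real k, 1:]) = Suc k"
    using nz dk by (subst degree_mult_eq) auto
  have "lead_coeff (FFp k * [:- real k, 1:]) = lead_coeff (FFp k) * lead_coeff [:- real k, 1:]"
    by (rule lead_coeff_mult)
  then have "coeff (FFp k * [:- real k, 1:]) (Suc k) = 1" using d dk lk by simp
  then show ?case using d by simp
qed simp

definition KP :: "nat \<Rightarrow> real \<Rightarrow> nat \<Rightarrow> real poly" where
  "KP N p n = (\<Sum>k=0..n. smult (cf N p n k) (FFp k))"

lemma poly_KP: "n \<le> N \<Longrightarrow> p \<noteq> 0 \<Longrightarrow> poly (KP N p n) x = Kr N p n x"
  unfolding KP_def by (simp add: poly_sum poly_FFp Kr_ff)

lemma KP_deg: "degree (KP N p n) = n \<and> coeff (KP N p n) n = 1"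
proof (cases n)
  case 0 then show ?thesis by (simp add: KP_def)
next
  case (Suc m)
  define R where "R = (\<Sum>k=0..m. smult (cf N p n k) (FFp k))"
  have KPe: "KP N p n = FFp n + R" unfolding KP_def R_def Suc by (simp add: add.commute)
  have dR: "degree R \<le> m" unfolding R_def
    by (rule degree_sum_le) (auto intro: order.trans[OF degree_smult_le] simp: FFp_deg)
  have d1: "degree (FFp n + R) = n" using dR Suc FFp_deg[of n] by (subst degree_add_eq_left) auto
  have "coeff R n = 0" using dR Suc by (intro coeff_eq_0) simp
  have fl: "coeff (FFp n) n = 1" using FFp_deg[of n] by auto
  then have "coeff (FFp n + R) n = 1" using \<open>coeff R n = 0\<close> by simp
  then show ?thesis using KPe d1 by simp
qed

lemma KP_nz: "KP N p n \<noteq> 0"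
  using KP_deg[of N p n] by auto

lemma wt_pos: "0 < p \<Longrightarrow> p < 1 \<Longrightarrow> x \<le> N \<Longrightarrow> 0 < wt N p x"
  unfolding wt_def by simp

lemma roots_zero:
  fixes P :: "real poly"
  assumes "degree P \<le> N" "\<And>x. x \<le> N \<Longrightarrow> poly P (real x) = 0"
  shows "P = 0"
proof (rule ccontr)
  assume nz: "P \<noteq> 0"
  have sub: "real ` {0..N} \<subseteq> {x. poly P x = 0}" using assms(2) by auto
  have c1: "card (real ` {0..N}) = Suc N" by (subst card_image) (auto simp: inj_on_def)
  have c2: "card (real ` {0..N}) \<le> card {x. poly P x = 0}" by (rule card_mono[OF poly_roots_finite[OF nz] sub])
  have c3: "card {x. poly P x = 0} \<le> degree P" by (rule card_poly_roots_bound[OF nz])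
  show False using c1 c2 c3 assms(1) by linarith
qed

lemma knorm_ipw: "knorm N p k = ipw N p (Kr N p k) (Kr N p k)"
  unfolding knorm_def ipw_def by (simp add: power2_eq_square)

lemma knorm_pos:
  assumes "0 < p" "p < 1" "k \<le> N"
  shows "0 < knorm N p k"
proof -
  have ge: "0 \<le> knorm N p k" unfolding knorm_def using wt_pos[OF assms(1,2)]
    by (intro sum_nonneg) (simp add: less_imp_le)
  have "knorm N p k \<noteq> 0"
  proof
    assume h: "knorm N p k = 0"
    have "\<forall>x\<in>{0..N}. (Kr N p k (real x))\<^sup>2 * wt N p x = 0"
      using h unfolding knorm_def
      by (subst sum_nonneg_eq_0_iff[symmetric]) (auto simp: less_imp_le wt_pos assms)
    have "poly (KP N p k) (real x) = 0" if x: "x \<le> N" for x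
    proof -
      have "Kr N p k (real x) = 0 \<or> wt N p x = 0" using \<open>\<forall>x\<in>{0..N}. _\<close> x by auto
      then show ?thesis using wt_pos[OF assms(1,2) x] assms by (auto simp: poly_KP)
    qed
    then have "KP N p k = 0" by (rule roots_zero[rotated]) (use KP_deg[of N p k] assms in auto)
    then show False by (simp add: KP_nz)
  qed
  then show ?thesis using ge by simp
qed

lemma Kr_0[simp]: "Kr N p 0 x = 1"
  unfolding Kr_def by simp

lemma span:
  assumes "degree q \<le> d" "d \<le> N" "p \<noteq> 0"
  shows "\<exists>c. \<forall>x. poly q x = (\<Sum>k=0..d. c k * Kr N p k x)"
  using assms
proof (induction d arbitrary: q)
  case 0
  then have "q = [:coeff q 0:]" by (metis degree_0_id le_0_eq)
  then have "poly q x = coeff q 0 * Kr N p 0 x" for x by (metis Kr_0 mult.right_neutral poly_pCons poly_0 add.right_neutral mult_zero_right)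
  then show ?case by auto
next
  case (Suc d)
  define q' where "q' = q - smult (coeff q (Suc d)) (KP N p (Suc d))"
  have "degree q' \<le> d"
  proof (rule degree_le, intro allI impI)
    fix i assume "d < i"
    show "coeff q' i = 0"
    proof (cases "i = Suc d")
      case True then show ?thesis using KP_deg[of N p "Suc d"] by (simp add: q'_def)
    next
      case False
      then have "Suc d < i" using \<open>d < i\<close> by simp
      then show ?thesis using Suc.prems KP_deg[of N p "Suc d"] by (simp add: q'_def coeff_eq_0)
    qed
  qed
  then obtain c where c: "\<And>x. poly q' x = (\<Sum>k=0..d. c k * Kr N p k x)"
    using Suc by auto
  define c' where "c' = c(Suc d := coeff q (Suc d))"
  have "poly q x = (\<Sum>k=0..Suc d. c' k * Kr N p k x)" for x
  proof -
    have "poly q x = poly q' x + coeff q (Suc d) * Kr N p (Suc d) x"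
      unfolding q'_def using Suc.prems by (simp add: poly_KP)
    also have "\<dots> = (\<Sum>k=0..d. c' k * Kr N p k x) + c' (Suc d) * Kr N p (Suc d) x"
      unfolding c c'_def by simp
    finally show ?thesis by simp
  qed
  then show ?case by blast
qed

lemma ipw_sum_left: "ipw N p (\<lambda>x. \<Sum>k\<in>A. c k * f k x) g = (\<Sum>k\<in>A. c k * ipw N p (f k) g)"
  unfolding ipw_def by (simp add: sum_distrib_left sum_distrib_right mult.assoc sum.swap[of _ A])

lemma expand:
  assumes "degree q \<le> d" "d \<le> N" "0 < p" "p < 1" "1 \<le> N"
  shows "poly q x = (\<Sum>k=0..d. ipw N p (poly q) (Kr N p k) / knorm N p k * Kr N p k x)"
proof -
  from span[of q d N p] assms obtain c where c0: "\<forall>x. poly q x = (\<Sum>k=0..d. c k * Kr N p k x)" by auto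
  then have c: "\<And>x. poly q x = (\<Sum>k=0..d. c k * Kr N p k x)" by blast
  have pq: "poly q = (\<lambda>x. \<Sum>k=0..d. c k * Kr N p k x)" using c by auto
  have "ipw N p (poly q) (Kr N p l) / knorm N p l = c l" if l: "l \<le> d" for l
  proof -
    have "ipw N p (poly q) (Kr N p l) = (\<Sum>k=0..d. c k * ipw N p (Kr N p k) (Kr N p l))"
      unfolding pq by (rule ipw_sum_left)
    also have "\<dots> = (\<Sum>k=0..d. if k = l then c l * knorm N p l else 0)"
      using assms l by (intro sum.cong refl) (auto simp: Kr_orth knorm_ipw)
    also have "\<dots> = c l * knorm N p l" using l by simp
    finally show ?thesis using knorm_pos[of p l N] assms l by simp
  qed
  then show ?thesis unfolding c by (intro sum.cong refl) auto
qed

lemma ipw_orth_low: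
  assumes "degree q < m" "m \<le> N" "0 < p" "p < 1" "1 \<le> N"
  shows "ipw N p (Kr N p m) (poly q) = 0"
proof -
  have "degree q \<le> m - 1" "m - 1 \<le> N" using assms by auto
  from span[OF this, of p] assms obtain c where c0: "\<forall>x. poly q x = (\<Sum>k=0..m-1. c k * Kr N p k x)" by auto
  then have c: "\<And>x. poly q x = (\<Sum>k=0..m-1. c k * Kr N p k x)" by blast
  have pq: "poly q = (\<lambda>x. \<Sum>k=0..m-1. c k * Kr N p k x)" using c by auto
  have "ipw N p (Kr N p m) (poly q) = (\<Sum>k=0..m-1. c k * ipw N p (Kr N p k) (Kr N p m))"
    unfolding ipw_sym[of N p "Kr N p m"] pq by (rule ipw_sum_left)
  also have "\<dots> = 0" using assms by (intro sum.neutral) (auto simp: Kr_orth)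
  finally show ?thesis .
qed


lemma fdiff_Suc': "fdiff (Suc j) f y = fdiff j f (y+1) - fdiff j f y"
  by (simp add: fdelta_def)

lemma fdiff_lin: "fdiff j (\<lambda>x. \<Sum>k\<in>A. c k * f k x) y = (\<Sum>k\<in>A. c k * fdiff j (f k) y)"
  by (induction j arbitrary: y) (simp_all add: fdelta_def sum_subtractf right_diff_distrib)

lemma fdiff_diff: "fdiff j (\<lambda>x. f x - g x) y = fdiff j f y - fdiff j g y"
  by (induction j arbitrary: y) (simp_all add: fdelta_def)

lemma fdiff_cong: "(\<And>i. i \<le> j \<Longrightarrow> f (y + real i) = g (y + real i)) \<Longrightarrow> fdiff j f y = fdiff j g y"
proof (induction j arbitrary: y)
  case 0 then show ?case using 0[of 0] by simp
next
  case (Suc j)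
  have a: "fdiff j f y = fdiff j g y" using Suc.prems by (intro Suc.IH) auto
  have b: "fdiff j f (y+1) = fdiff j g (y+1)"
  proof (rule Suc.IH)
    fix i assume "i \<le> j"
    then show "f (y + 1 + real i) = g (y + 1 + real i)" using Suc.prems[of "Suc i"] by (simp add: add.assoc)
  qed
  show ?case by (simp add: fdelta_def a b)
qed

lemma sob_diff: "sob_ip N p lam mu j (P - P') q = sob_ip N p lam mu j P q - sob_ip N p lam mu j P' q"
proof -
  have e: "poly (P - P') = (\<lambda>x. poly P x - poly P' x)" by auto
  show ?thesis unfolding sob_ip_def e fdiff_diff
    by (simp add: sum_subtractf algebra_simps)
qed

lemma KS_eq:
  assumes "degree P = m" "coeff P m = 1" "\<And>q. degree q < m \<Longrightarrow> sob_ip N p lam mu j P q = 0"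
    and "m \<le> N" "0 < p" "p < 1" "0 \<le> lam" "0 \<le> mu"
  shows "KS N p lam mu j m = P"
  unfolding KS_def
proof (rule the_equality)
  show "degree P = m \<and> lead_coeff P = 1 \<and> (\<forall>q. degree q < m \<longrightarrow> sob_ip N p lam mu j P q = 0)"
    using assms by auto
next
  fix P' assume h: "degree P' = m \<and> lead_coeff P' = 1 \<and> (\<forall>q. degree q < m \<longrightarrow> sob_ip N p lam mu j P' q = 0)"
  define r where "r = P' - P"
  have dr: "degree r < m \<or> r = 0"
  proof (cases m)
    case 0
    then have "degree P' = 0" "degree P = 0" using h assms by auto
    then have "P' = [:1:]" "P = [:1:]" using h assms 0 by (metis degree_0_id)+
    then show ?thesis by (simp add: r_def)
  next
    case (Suc m')
    have "degree r \<le> m'"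
    proof (rule degree_le, intro allI impI)
      fix i assume "m' < i"
      then show "coeff r i = 0" using h assms Suc
        by (cases "i = m") (auto simp: r_def coeff_eq_0)
    qed
    then show ?thesis using Suc by simp
  qed
  show "P' = P"
  proof (cases "r = 0")
    case True then show ?thesis by (simp add: r_def)
  next
    case False
  then have dr': "degree r < m" using dr by auto
  have "sob_ip N p lam mu j r r = 0"
    unfolding r_def sob_diff using h assms dr' r_def by auto
  then have s: "(\<Sum>x=0..N. poly r (real x) * poly r (real x) * wt N p x)
     + lam * fdiff j (poly r) 0 * fdiff j (poly r) 0 + mu * fdiff j (poly r) (real N) * fdiff j (poly r) (real N) = 0"
    unfolding sob_ip_def .
  have nn1: "0 \<le> (\<Sum>x=0..N. poly r (real x) * poly r (real x) * wt N p x)"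
    using wt_pos[OF assms(5,6)] by (intro sum_nonneg) (simp add: less_imp_le)
  have nn2: "0 \<le> lam * fdiff j (poly r) 0 * fdiff j (poly r) 0" using assms
    by (metis mult.assoc mult_nonneg_nonneg zero_le_square)
  have nn3: "0 \<le> mu * fdiff j (poly r) (real N) * fdiff j (poly r) (real N)" using assms
    by (metis mult.assoc mult_nonneg_nonneg zero_le_square)
  have "(\<Sum>x=0..N. poly r (real x) * poly r (real x) * wt N p x) = 0" using s nn1 nn2 nn3 by linarith
  then have z: "\<forall>x\<in>{0..N}. poly r (real x) * poly r (real x) * wt N p x = 0"
    using wt_pos[OF assms(5,6)] by (subst sum_nonneg_eq_0_iff[symmetric]) (auto simp: less_imp_le)
  have "r = 0"
  proof (rule roots_zero)
    show "degree r \<le> N" using dr assms by auto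
    fix x assume "x \<le> N"
    then show "poly r (real x) = 0" using z wt_pos[OF assms(5,6), of x N] by auto
  qed
  then show "P' = P" by (simp add: r_def)
  qed
qed

lemma cs_w:
  fixes u v g :: "nat \<Rightarrow> real"
  assumes "finite A" "\<And>k. k \<in> A \<Longrightarrow> 0 \<le> g k"
  shows "(\<Sum>k\<in>A. u k * v k * g k)^2 \<le> (\<Sum>k\<in>A. u k * u k * g k) * (\<Sum>k\<in>A. v k * v k * g k)"
proof -
  define a where "a = (\<Sum>k\<in>A. u k * u k * g k)"
  define b where "b = (\<Sum>k\<in>A. u k * v k * g k)"
  define c where "c = (\<Sum>k\<in>A. v k * v k * g k)"
  have c0: "0 \<le> c" unfolding c_def using assms by (intro sum_nonneg) simp
  have quad: "0 \<le> a + 2 * t * b + t * t * c" for t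
  proof -
    have "0 \<le> (\<Sum>k\<in>A. (u k + t * v k) * (u k + t * v k) * g k)"
      using assms by (intro sum_nonneg) simp
    also have "\<dots> = (\<Sum>k\<in>A. u k * u k * g k + 2 * t * (u k * v k * g k) + t * t * (v k * v k * g k))"
      by (rule sum.cong) (simp_all add: algebra_simps)
    also have "\<dots> = a + 2 * t * b + t * t * c"
      unfolding a_def b_def c_def by (simp add: sum.distrib sum_distrib_left)
    finally show ?thesis .
  qed
  show ?thesis
  proof (cases "c = 0")
    case True
    have "\<forall>k\<in>A. v k * v k * g k = 0"
      using True assms unfolding c_def by (subst sum_nonneg_eq_0_iff[symmetric]) auto
    then have "b = 0" unfolding b_def by (intro sum.neutral) auto
    then show ?thesis using True by (simp add: a_def[symmetric] c_def[symmetric] b_def[symmetric])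
  next
    case False
    then have cp: "0 < c" using c0 by simp
    have "0 \<le> a + 2 * (- b / c) * b + (- b / c) * (- b / c) * c" by (rule quad)
    then have "0 \<le> a * c - b * b" using cp by (simp add: field_simps power2_eq_square)
    then show ?thesis unfolding a_def[symmetric] b_def[symmetric] c_def[symmetric] by (simp add: power2_eq_square)
  qed
qed

lemma Kker_sym: "Kker N p j j m x y = Kker N p j j m y x"
  unfolding Kker_def by (simp add: mult.commute)

lemma Kker_alt: "Kker N p j j m x y = (\<Sum>k=0..m. fdiff j (Kr N p k) x * fdiff j (Kr N p k) y * inverse (knorm N p k))"
  unfolding Kker_def by (simp add: divide_inverse)

lemma delta_pos:
  assumes "0 \<le> lam" "0 \<le> mu" "0 < p" "p < 1" "n - 1 \<le> N"
  shows "0 < deltan N p lam mu j n"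
proof -
  define a where "a = Kker N p j j (n-1) 0 0"
  define b where "b = Kker N p j j (n-1) 0 (real N)"
  define c where "c = Kker N p j j (n-1) (real N) (real N)"
  have g: "\<And>k. k \<in> {0..n-1} \<Longrightarrow> 0 \<le> inverse (knorm N p k)"
    using knorm_pos[OF assms(3,4)] assms(5) by (simp add: less_imp_le)
  have a0: "0 \<le> a" unfolding a_def Kker_alt using g by (intro sum_nonneg) simp
  have c0: "0 \<le> c" unfolding c_def Kker_alt using g by (intro sum_nonneg) simp
  have cs: "b^2 \<le> a * c" unfolding a_def b_def c_def Kker_alt by (rule cs_w) (use g in auto)
  have d: "deltan N p lam mu j n = 1 + lam * a + mu * c + lam * mu * (a * c - b^2)"
  proof -
    have bs: "Kker N p j j (n-1) (real N) 0 = b" unfolding b_def by (rule Kker_sym)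
    show ?thesis unfolding deltan_def a_def[symmetric] c_def[symmetric] b_def[symmetric] bs
      by (simp add: algebra_simps power2_eq_square)
  qed
  have "0 \<le> lam * a + mu * c + lam * mu * (a * c - b^2)"
    using assms a0 c0 cs by (intro add_nonneg_nonneg mult_nonneg_nonneg) auto
  then show ?thesis unfolding d by linarith
qed

lemma cramer_gen:
  fixes lam mu a b c d d0 dN D X Y :: real
  assumes "D \<noteq> 0" "D = (1 + lam * a) * (1 + mu * d) - lam * mu * b * c"
    "X = d0 * (1 + mu * d) - mu * b * dN" "Y = (1 + lam * a) * dN - lam * c * d0"
  shows "d0 - (lam * (X / D) * a + mu * (Y / D) * b) = X / D"
    and "dN - (lam * (X / D) * c + mu * (Y / D) * d) = Y / D"
proof -
  have e1: "d0 * D - lam * X * a - mu * Y * b = X" unfolding assms(2,3,4) by algebra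
  have e2: "dN * D - lam * X * c - mu * Y * d = Y" unfolding assms(2,3,4) by algebra
  have "d0 - (lam * (X / D) * a + mu * (Y / D) * b) = (d0 * D - lam * X * a - mu * Y * b) / D"
    using assms(1) by (simp add: field_simps)
  then show "d0 - (lam * (X / D) * a + mu * (Y / D) * b) = X / D" using e1 by simp
  have "dN - (lam * (X / D) * c + mu * (Y / D) * d) = (dN * D - lam * X * c - mu * Y * d) / D"
    using assms(1) by (simp add: field_simps)
  then show "dN - (lam * (X / D) * c + mu * (Y / D) * d) = Y / D" using e2 by simp
qed


definition kerf :: "nat \<Rightarrow> real \<Rightarrow> nat \<Rightarrow> nat \<Rightarrow> real \<Rightarrow> real \<Rightarrow> real" where
  "kerf N p j m y x = (\<Sum>k=0..m-1. Kr N p k x * fdiff j (Kr N p k) y / knorm N p k)"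

lemma ipw_diff: "ipw N p (\<lambda>x. f x - g x) h = ipw N p f h - ipw N p g h"
  unfolding ipw_def by (simp add: sum_subtractf algebra_simps)

lemma cramer2:
  fixes lam mu a b c d ua ub D X Y :: real
  assumes "D \<noteq> 0" "D = (1 + lam * a) * (1 + mu * d) - lam * mu * b * c"
    "X = ua * (1 + mu * d) - mu * b * ub" "Y = (1 + lam * a) * ub - lam * c * ua"
  shows "ua - (lam * (X / D) * a + mu * (Y / D) * b) = X / D"
    and "ub - (lam * (X / D) * c + mu * (Y / D) * d) = Y / D"
proof -
  have e1: "ua * D - lam * X * a - mu * Y * b = X" unfolding assms(2,3,4) by algebra
  have e2: "ub * D - lam * X * c - mu * Y * d = Y" unfolding assms(2,3,4) by algebra
  have "ua - (lam * (X / D) * a + mu * (Y / D) * b) = (ua * D - lam * X * a - mu * Y * b) / D"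
    using assms(1) by (simp add: field_simps)
  then show "ua - (lam * (X / D) * a + mu * (Y / D) * b) = X / D" using e1 by simp
  have "ub - (lam * (X / D) * c + mu * (Y / D) * d) = (ub * D - lam * X * c - mu * Y * d) / D"
    using assms(1) by (simp add: field_simps)
  then show "ub - (lam * (X / D) * c + mu * (Y / D) * d) = Y / D" using e2 by simp
qed


lemma KS_repr:
  assumes "1 \<le> m" "m \<le> N" "0 < p" "p < 1" "0 \<le> lam" "0 \<le> mu"
  shows "poly (KS N p lam mu j m) x = Kr N p m x - lam * Phi1 N p lam mu j m * kerf N p j m 0 x
           - mu * Phi2 N p lam mu j m * kerf N p j m (real N) x"
proof -
  have N1: "1 \<le> N" using assms by simp
  define F1 where "F1 = Phi1 N p lam mu j m"
  define F2 where "F2 = Phi2 N p lam mu j m"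
  define D0 where "D0 k = fdiff j (Kr N p k) 0" for k
  define DN where "DN k = fdiff j (Kr N p k) (real N)" for k
  define h where "h k = knorm N p k" for k
  define e where "e k = lam * F1 * (D0 k / h k) + mu * F2 * (DN k / h k)" for k
  define QP where "QP = KP N p m - (\<Sum>k=0..m-1. smult (e k) (KP N p k))"
  have pQ: "poly QP = (\<lambda>x. Kr N p m x - (\<Sum>k=0..m-1. e k * Kr N p k x))"
    unfolding QP_def using assms by (auto simp: poly_sum poly_KP)
  have eK: "(\<Sum>k=0..m-1. e k * Kr N p k x) = lam * F1 * kerf N p j m 0 x + mu * F2 * kerf N p j m (real N) x" for x
  proof -
    have "(\<Sum>k=0..m-1. e k * Kr N p k x) = (\<Sum>k=0..m-1. lam * F1 * (Kr N p k x * D0 k / h k) + mu * F2 * (Kr N p k x * DN k / h k))"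
      unfolding e_def by (rule sum.cong) (simp_all add: algebra_simps)
    then show ?thesis unfolding kerf_def sum.distrib sum_distrib_left[symmetric] D0_def DN_def h_def by simp
  qed
  have dS: "degree (\<Sum>k=0..m-1. smult (e k) (KP N p k)) \<le> m - 1"
    by (rule degree_sum_le) (auto intro: order.trans[OF degree_smult_le] simp: KP_deg)
  have cS: "coeff (\<Sum>k=0..m-1. smult (e k) (KP N p k)) m = 0"
    using dS assms by (intro coeff_eq_0) simp
  have cQ: "coeff QP m = 1" unfolding QP_def using cS KP_deg[of N p m] by simp
  have dQ1: "degree QP \<le> m" unfolding QP_def using dS KP_deg[of N p m]
    by (intro degree_diff_le) auto
  have dQ: "degree QP = m" using dQ1 le_degree[of QP m] cQ by simp
  have DQ: "fdiff j (poly QP) y = fdiff j (Kr N p m) y - (\<Sum>k=0..m-1. e k * fdiff j (Kr N p k) y)" for y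
    unfolding pQ fdiff_diff fdiff_lin ..
  have S0: "(\<Sum>k=0..m-1. e k * D0 k) = lam * F1 * Kker N p j j (m-1) 0 0 + mu * F2 * Kker N p j j (m-1) 0 (real N)"
  proof -
    have "(\<Sum>k=0..m-1. e k * D0 k) = (\<Sum>k=0..m-1. lam * F1 * (D0 k * D0 k / h k) + mu * F2 * (D0 k * DN k / h k))"
      unfolding e_def by (rule sum.cong) (simp_all add: algebra_simps)
    then show ?thesis unfolding Kker_def sum.distrib sum_distrib_left[symmetric] D0_def DN_def h_def by simp
  qed
  have SN: "(\<Sum>k=0..m-1. e k * DN k) = lam * F1 * Kker N p j j (m-1) (real N) 0 + mu * F2 * Kker N p j j (m-1) (real N) (real N)"
  proof -
    have "(\<Sum>k=0..m-1. e k * DN k) = (\<Sum>k=0..m-1. lam * F1 * (DN k * D0 k / h k) + mu * F2 * (DN k * DN k / h k))"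
      unfolding e_def by (rule sum.cong) (simp_all add: algebra_simps)
    then show ?thesis unfolding Kker_def sum.distrib sum_distrib_left[symmetric] D0_def DN_def h_def by simp
  qed
  have "0 < deltan N p lam mu j m" by (rule delta_pos) (use assms in auto)
  then have dpos: "deltan N p lam mu j m \<noteq> 0" by simp
  note cr = cramer2[where ua="fdiff j (Kr N p m) 0" and ub="fdiff j (Kr N p m) (real N)", OF dpos deltan_def refl refl]
  have Q0: "fdiff j (poly QP) 0 = F1"
    unfolding DQ using S0 cr(1) unfolding F1_def F2_def Phi1_def Phi2_def D0_def by simp
  have QN: "fdiff j (poly QP) (real N) = F2"
    unfolding DQ using SN cr(2) unfolding F1_def F2_def Phi1_def Phi2_def DN_def by simp
  have orth: "sob_ip N p lam mu j QP q = 0" if dq: "degree q < m" for q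
  proof -
    have dq': "degree q \<le> m - 1" "m - 1 \<le> N" using dq assms by auto
    have pq: "poly q = (\<lambda>x. \<Sum>k=0..m-1. ipw N p (poly q) (Kr N p k) / knorm N p k * Kr N p k x)"
      using expand[OF dq' assms(3,4) N1] by auto
    have Dq: "fdiff j (poly q) y = (\<Sum>k=0..m-1. ipw N p (poly q) (Kr N p k) / knorm N p k * fdiff j (Kr N p k) y)" for y
      by (subst pq) (rule fdiff_lin)
    have "ipw N p (poly QP) (poly q) = ipw N p (Kr N p m) (poly q) - (\<Sum>k=0..m-1. e k * ipw N p (Kr N p k) (poly q))"
      unfolding pQ ipw_diff ipw_sum_left ..
    also have "ipw N p (Kr N p m) (poly q) = 0" by (rule ipw_orth_low[OF dq assms(2-4) N1])
    also have "(\<Sum>k=0..m-1. e k * ipw N p (Kr N p k) (poly q)) = lam * F1 * fdiff j (poly q) 0 + mu * F2 * fdiff j (poly q) (real N)"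
    proof -
      have "(\<Sum>k=0..m-1. e k * ipw N p (Kr N p k) (poly q)) =
         (\<Sum>k=0..m-1. lam * F1 * (ipw N p (poly q) (Kr N p k) / knorm N p k * D0 k) + mu * F2 * (ipw N p (poly q) (Kr N p k) / knorm N p k * DN k))"
        unfolding e_def h_def by (rule sum.cong) (simp_all add: ipw_sym[of N p "Kr N p _"] algebra_simps)
      then show ?thesis unfolding Dq sum.distrib sum_distrib_left[symmetric] D0_def DN_def by simp
    qed
    finally have ip: "ipw N p (poly QP) (poly q) = - (lam * F1 * fdiff j (poly q) 0 + mu * F2 * fdiff j (poly q) (real N))" by simp
    show ?thesis unfolding sob_ip_def ipw_def[symmetric] ip Q0 QN by (simp add: algebra_simps)
  qed
  have "KS N p lam mu j m = QP"
    by (rule KS_eq[OF dQ cQ orth assms(2-6)])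
  then have "poly (KS N p lam mu j m) x = Kr N p m x - (\<Sum>k=0..m-1. e k * Kr N p k x)"
    by (simp add: pQ)
  then show ?thesis unfolding eK F1_def F2_def by (simp add: algebra_simps)
qed


lemma ffact_nz: "(\<And>i. i < k \<Longrightarrow> z - real i \<noteq> 0) \<Longrightarrow> ffact z k \<noteq> 0"
  unfolding ffact_def by (simp add: prod_zero_iff)

definition cc :: "nat \<Rightarrow> nat \<Rightarrow> real \<Rightarrow> real" where
  "cc j k u = (if k \<le> j then fact j / (fact k * ffact (u - real k) (Suc j - k)) else 0)"

lemma cc_step:
  assumes "k \<le> Suc j" "\<And>i. i \<le> Suc j \<Longrightarrow> u - real i \<noteq> 0"
  shows "cc j k (u-1) + (if k = 0 then 0 else cc j (k-1) (u-1)) - cc j k u = cc (Suc j) k u"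
proof (cases "k = Suc j")
  case True
  have a: "cc (Suc j) (Suc j) u = 1 / (u - real (Suc j))" unfolding cc_def by (simp del: fact_Suc)
  have b: "cc j j (u - 1) = 1 / (u - 1 - real j)" unfolding cc_def by (simp del: fact_Suc)
  have c: "cc j (Suc j) v = 0" for v unfolding cc_def by simp
  show ?thesis using True by (simp add: a b c algebra_simps)
next
  case False
  then obtain d where jd: "j = k + d" using assms(1) by (metis le_SucE le_iff_add)
  have e1: "Suc j - k = Suc d" "Suc (Suc j) - k = Suc (Suc d)" using jd by simp_all
  define F where "F = ffact (u - real k - 1) d"
  have Fnz: "F \<noteq> 0" unfolding F_def
  proof (rule ffact_nz)
    fix i assume "i < d"
    then show "u - real k - 1 - real i \<noteq> 0" using assms(2)[of "k + 1 + i"] jd by (simp add: algebra_simps)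
  qed
  have a1: "u - real k \<noteq> 0" using assms(2)[of k] jd by simp
  have a2: "u - real k - 1 - real d \<noteq> 0" using assms(2)[of "Suc j"] jd by (simp add: algebra_simps)
  have f1: "ffact (u - 1 - real k) (Suc d) = F * (u - real k - 1 - real d)"
    unfolding F_def by (simp add: ffact_Suc algebra_simps)
  have f2: "ffact (u - real k) (Suc d) = (u - real k) * F"
    unfolding F_def by (simp add: ffact_Suc' algebra_simps)
  have f3: "ffact (u - real k) (Suc (Suc d)) = (u - real k) * F * (u - real k - 1 - real d)"
    using f2 by (simp only: ffact_Suc) (simp add: algebra_simps)
  have T1: "cc j k (u-1) = fact j / (fact k * (F * (u - real k - 1 - real d)))"
    unfolding cc_def e1 f1[symmetric] using jd by simp
  have T2: "cc j k u = fact j / (fact k * ((u - real k) * F))"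
    unfolding cc_def e1 f2[symmetric] using jd by simp
  have R: "cc (Suc j) k u = fact (Suc j) / (fact k * ((u - real k) * F * (u - real k - 1 - real d)))"
    unfolding cc_def e1 f3[symmetric] using jd by simp
  have T3: "(if k = 0 then 0 else cc j (k-1) (u-1)) = real k * fact j / (fact k * ((u - real k) * F * (u - real k - 1 - real d)))"
  proof (cases k)
    case 0 then show ?thesis by simp
  next
    case (Suc i)
    have e2: "Suc j - i = Suc (Suc d)" using jd Suc by simp
    have "ffact (u - 1 - real i) (Suc (Suc d)) = (u - real k) * F * (u - real k - 1 - real d)"
      using f3 Suc by (simp add: algebra_simps)
    then have "cc j i (u-1) = fact j / (fact i * ((u - real k) * F * (u - real k - 1 - real d)))"
      unfolding cc_def e2 using jd Suc by simp
    moreover have "real k * fact j / (fact k * D) = fact j / (fact i * D)" for D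
    proof -
      have "fact k * D = real k * (fact i * D)" using Suc by (simp del: fact_Suc add: fact_Suc[of i])
      moreover have "real k \<noteq> 0" using Suc by simp
      ultimately show ?thesis by (metis mult_divide_mult_cancel_left)
    qed
    ultimately show ?thesis using Suc by simp
  qed
  have fs: "fact (Suc j) = (real k + real d + 1) * fact j" using jd by (simp add: algebra_simps)
  define w where "w = u - real k - 1 - real d"
  define Z where "Z = fact k * ((u - real k) * F * w)"
  have T1': "cc j k (u-1) = fact j * (u - real k) / Z"
    unfolding T1 Z_def w_def[symmetric] using a1 by simp
  have T2': "cc j k u = fact j * w / Z"
    unfolding T2 Z_def using a2 unfolding w_def[symmetric] by simp
  have T3': "(if k = 0 then 0 else cc j (k-1) (u-1)) = real k * fact j / Z"
    unfolding T3 Z_def w_def ..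
  have R': "cc (Suc j) k u = fact (Suc j) / Z" unfolding R Z_def w_def ..
  have num: "fact j * (u - real k) + real k * fact j - fact j * w = fact (Suc j)"
    unfolding fs w_def by (simp add: algebra_simps)
  show ?thesis unfolding T1' T2' T3' R' num[symmetric]
    by (simp add: add_divide_distrib diff_divide_distrib)
qed

lemma fdiff_quot_R:
  assumes "\<And>i. i \<le> j \<Longrightarrow> x - y - real i \<noteq> 0"
  shows "fdiff j (\<lambda>t. g t / (x - t)) y = (\<Sum>k=0..j. cc j k (x - y) * fdiff k g y)"
  using assms
proof (induction j arbitrary: y)
  case 0
  then show ?case by (simp add: cc_def)
next
  case (Suc j)
  have h1: "\<And>i. i \<le> j \<Longrightarrow> x - y - real i \<noteq> 0" using Suc.prems by simp
  have h2: "\<And>i. i \<le> j \<Longrightarrow> x - (y + 1) - real i \<noteq> 0"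
    using Suc.prems by (metis Suc_le_mono diff_diff_eq of_nat_Suc add.commute)
  have ext: "(\<Sum>k=0..j. cc j k u * fdiff k g t) = (\<Sum>k=0..Suc j. cc j k u * fdiff k g t)" for u t
    by (simp add: cc_def)
  have "fdiff (Suc j) (\<lambda>t. g t / (x - t)) y = (\<Sum>k=0..j. cc j k (x - (y+1)) * fdiff k g (y+1)) - (\<Sum>k=0..j. cc j k (x - y) * fdiff k g y)"
    using Suc.IH[OF h1] Suc.IH[OF h2] by (simp add: fdelta_def)
  also have "(\<Sum>k=0..j. cc j k (x - (y+1)) * fdiff k g (y+1)) =
      (\<Sum>k=0..j. cc j k (x - y - 1) * fdiff k g y) + (\<Sum>k=0..j. cc j k (x - y - 1) * fdiff (Suc k) g y)"
    by (simp add: fdelta_def sum.distrib[symmetric] algebra_simps)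
  also have "(\<Sum>k=0..j. cc j k (x - y - 1) * fdiff (Suc k) g y) = (\<Sum>k=0..Suc j. (if k = 0 then 0 else cc j (k-1) (x - y - 1)) * fdiff k g y)"
    by (subst sum.atLeast0_atMost_Suc_shift) simp
  also have "(\<Sum>k=0..j. cc j k (x - y - 1) * fdiff k g y) = (\<Sum>k=0..Suc j. cc j k (x - y - 1) * fdiff k g y)"
    by (simp add: cc_def)
  also have "(\<Sum>k=0..j. cc j k (x - y) * fdiff k g y) = (\<Sum>k=0..Suc j. cc j k (x - y) * fdiff k g y)"
    by (simp add: cc_def)
  also have "(\<Sum>k=0..Suc j. cc j k (x - y - 1) * fdiff k g y) + (\<Sum>k=0..Suc j. (if k = 0 then 0 else cc j (k-1) (x - y - 1)) * fdiff k g y)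
      - (\<Sum>k=0..Suc j. cc j k (x - y) * fdiff k g y)
     = (\<Sum>k=0..Suc j. (cc j k (x - y - 1) + (if k = 0 then 0 else cc j (k-1) (x - y - 1)) - cc j k (x - y)) * fdiff k g y)"
    unfolding sum.distrib[symmetric] sum_subtractf[symmetric] by (rule sum.cong) (simp_all add: algebra_simps)
  also have "\<dots> = (\<Sum>k=0..Suc j. cc (Suc j) k (x - y) * fdiff k g y)"
    by (rule sum.cong[OF refl], subst cc_step) (use Suc.prems in auto)
  finally show ?case .
qed

lemma fdiff_quot:
  assumes "\<And>i. i \<le> j \<Longrightarrow> x - y - real i \<noteq> 0"
  shows "fdiff j (\<lambda>t. g t / (x - t)) y = fact j / ffact (x - y) (j+1) * (\<Sum>k=0..j. fdiff k g y / fact k * ffact (x - y) k)"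
proof -
  have "fact j / ffact (x - y) (j+1) * (fdiff k g y / fact k * ffact (x - y) k) = cc j k (x - y) * fdiff k g y" if k: "k \<le> j" for k
  proof -
    have sp: "ffact (x - y) (j+1) = ffact (x - y) k * ffact (x - y - real k) (Suc j - k)"
      using ffact_add[of "x-y" k "Suc j - k"] k by simp
    have nz1: "ffact (x - y) k \<noteq> 0" by (rule ffact_nz) (use assms k in auto)
    have nz2: "ffact (x - y - real k) (Suc j - k) \<noteq> 0"
    proof (rule ffact_nz)
      fix i assume "i < Suc j - k"
      then show "x - y - real k - real i \<noteq> 0" using assms[of "k+i"] by (simp add: algebra_simps)
    qed
    show ?thesis unfolding cc_def sp using k nz1 nz2 by (simp add: field_simps)
  qed
  then have "(\<Sum>k=0..j. cc j k (x - y) * fdiff k g y) = fact j / ffact (x - y) (j+1) * (\<Sum>k=0..j. fdiff k g y / fact k * ffact (x - y) k)"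
    unfolding sum_distrib_left by (intro sum.cong refl) auto
  then show ?thesis using fdiff_quot_R[OF assms] by simp
qed

lemma fdiff_cmul: "fdiff j (\<lambda>t. c * f t) y = c * fdiff j f y"
  by (induction j arbitrary: y) (simp_all add: fdelta_def algebra_simps)

lemma ipw_lin3: "ipw N p (\<lambda>x. f x + a * g x + b * h x) e = ipw N p f e + a * ipw N p g e + b * ipw N p h e"
  unfolding ipw_def by (simp add: sum.distrib sum_distrib_left algebra_simps)

lemma beta_nz: "1 \<le> k \<Longrightarrow> k \<le> N \<Longrightarrow> 0 < p \<Longrightarrow> p < 1 \<Longrightarrow> beta N p k \<noteq> 0"
  unfolding beta_def by auto

lemma norm_rel:
  assumes "1 \<le> k" "Suc k \<le> N" "0 < p" "p < 1"
  shows "knorm N p k = beta N p k * knorm N p (k-1)"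
proof -
  have p0: "p \<noteq> 0" using assms by simp
  have N1: "1 \<le> N" using assms by simp
  have r1: "(\<lambda>x. x * Kr N p k x) = (\<lambda>x. Kr N p (Suc k) x + alpha N p k * Kr N p k x + beta N p k * Kr N p (k-1) x)"
    using Kr_rec[OF assms(2) p0] by auto
  have r2: "(\<lambda>x. x * Kr N p (k-1) x) = (\<lambda>x. Kr N p k x + alpha N p (k-1) * Kr N p (k-1) x + beta N p (k-1) * Kr N p (k-1-1) x)"
    using Kr_rec[of "k-1" N p] assms p0 by auto
  have "ipw N p (\<lambda>x. x * Kr N p k x) (Kr N p (k-1)) = beta N p k * knorm N p (k-1)"
    unfolding r1 ipw_lin3 knorm_ipw using assms p0 N1 by (simp add: Kr_orth)
  moreover have "ipw N p (\<lambda>x. x * Kr N p k x) (Kr N p (k-1)) = ipw N p (Kr N p k) (\<lambda>x. x * Kr N p (k-1) x)"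
    unfolding ipw_def by (simp add: algebra_simps)
  moreover have "ipw N p (Kr N p k) (\<lambda>x. x * Kr N p (k-1) x) = knorm N p k"
  proof -
    have "ipw N p (Kr N p k) (\<lambda>x. x * Kr N p (k-1) x) = ipw N p (\<lambda>x. x * Kr N p (k-1) x) (Kr N p k)"
      by (rule ipw_sym)
    also have "\<dots> = knorm N p k + beta N p (k-1) * ipw N p (Kr N p (k-1-1)) (Kr N p k)"
      unfolding r2 ipw_lin3 knorm_ipw using assms p0 N1 by (simp add: Kr_orth)
    also have "beta N p (k-1) * ipw N p (Kr N p (k-1-1)) (Kr N p k) = 0"
    proof (cases "k = 1")
      case True then show ?thesis by (simp add: beta_def)
    next
      case False then show ?thesis using assms p0 N1 by (simp add: Kr_orth)
    qed
    finally show ?thesis by simp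
  qed
  ultimately show ?thesis by simp
qed

lemma CD:
  assumes "1 \<le> m" "m \<le> N" "0 < p" "p < 1"
  shows "(x - y) * (\<Sum>k=0..m-1. Kr N p k x * Kr N p k y / knorm N p k)
       = (Kr N p m x * Kr N p (m-1) y - Kr N p (m-1) x * Kr N p m y) / knorm N p (m-1)"
proof -
  have p0: "p \<noteq> 0" using assms by simp
  obtain d where m: "m = Suc d" using assms(1) by (cases m) auto
  have "Suc d \<le> N \<Longrightarrow> (x - y) * (\<Sum>k=0..d. Kr N p k x * Kr N p k y / knorm N p k)
       = (Kr N p (Suc d) x * Kr N p d y - Kr N p d x * Kr N p (Suc d) y) / knorm N p d"
  proof (induction d)
    case 0
    have "\<And>z. z = Kr N p 1 z + alpha N p 0" using Kr_rec[of 0 N p] 0 p0 by (simp add: beta_def)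
    then have "Kr N p 1 x - Kr N p 1 y = x - y" by (metis add_diff_cancel_right)
    then show ?case by simp
  next
    case (Suc d)
    have IH: "(x - y) * (\<Sum>k=0..d. Kr N p k x * Kr N p k y / knorm N p k)
       = (Kr N p (Suc d) x * Kr N p d y - Kr N p d x * Kr N p (Suc d) y) / knorm N p d" using Suc by simp
    have rx: "x * Kr N p (Suc d) x = Kr N p (Suc (Suc d)) x + alpha N p (Suc d) * Kr N p (Suc d) x + beta N p (Suc d) * Kr N p d x"
      using Kr_rec[OF Suc.prems p0] by simp
    have ry: "y * Kr N p (Suc d) y = Kr N p (Suc (Suc d)) y + alpha N p (Suc d) * Kr N p (Suc d) y + beta N p (Suc d) * Kr N p d y"
      using Kr_rec[OF Suc.prems p0] by simp
    have hr: "knorm N p (Suc d) = beta N p (Suc d) * knorm N p d"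
      using norm_rel[of "Suc d" N p] Suc.prems assms by simp
    have bz: "beta N p (Suc d) \<noteq> 0" using beta_nz[of "Suc d" N p] Suc.prems assms by simp
    have hz: "knorm N p d \<noteq> 0" using knorm_pos[of p d N] Suc.prems assms by simp
    define a0 where "a0 = Kr N p d x"
    define a1 where "a1 = Kr N p (Suc d) x"
    define a2 where "a2 = Kr N p (Suc (Suc d)) x"
    define b0 where "b0 = Kr N p d y"
    define b1 where "b1 = Kr N p (Suc d) y"
    define b2 where "b2 = Kr N p (Suc (Suc d)) y"
    define B where "B = beta N p (Suc d)"
    define A where "A = alpha N p (Suc d)"
    define h where "h = knorm N p d"
    have key: "(x - y) * (a1 * b1) = (a2 * b1 - a1 * b2) + B * (a0 * b1 - a1 * b0)"
    proof -
      have "(x - y) * (a1 * b1) = (x * a1) * b1 - a1 * (y * b1)" by (simp add: algebra_simps)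
      also have "\<dots> = (a2 + A * a1 + B * a0) * b1 - a1 * (b2 + A * b1 + B * b0)"
        unfolding a0_def a1_def a2_def b0_def b1_def b2_def A_def B_def rx ry ..
      finally show ?thesis by (simp add: algebra_simps)
    qed
    have "(x - y) * (\<Sum>k=0..Suc d. Kr N p k x * Kr N p k y / knorm N p k)
       = (a1 * b0 - a0 * b1) / h + (x - y) * (a1 * b1) / (B * h)"
      using IH unfolding a0_def a1_def b0_def b1_def h_def B_def hr[symmetric] by (simp add: distrib_left)
    also have "\<dots> = (a2 * b1 - a1 * b2) / (B * h)"
      unfolding key using bz hz unfolding B_def[symmetric] h_def[symmetric] by (simp add: field_simps)
    finally show ?case unfolding a1_def a2_def b1_def b2_def B_def h_def hr[symmetric] by simp
  qed
  then show ?thesis using assms m by simp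
qed

lemma kerf_AB:
  assumes "1 \<le> m" "m \<le> N" "0 < p" "p < 1" "\<And>i. i \<le> j \<Longrightarrow> x - y - real i \<noteq> 0"
  shows "kerf N p j m y x = An N p j m x y * Kr N p m x + Bn N p j m x y * Kr N p (m-1) x"
proof -
  define h where "h = knorm N p (m-1)"
  have "kerf N p j m y x = fdiff j (\<lambda>t. \<Sum>k=0..m-1. (Kr N p k x / knorm N p k) * Kr N p k t) y"
    unfolding kerf_def fdiff_lin by (rule sum.cong) simp_all
  also have "\<dots> = fdiff j (\<lambda>t. (Kr N p m x / h) * (Kr N p (m-1) t / (x - t)) - (Kr N p (m-1) x / h) * (Kr N p m t / (x - t))) y"
  proof (rule fdiff_cong)
    fix i assume "i \<le> j"
    then have nz: "x - (y + real i) \<noteq> 0" using assms(5) by (simp add: algebra_simps)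
    have "(x - (y + real i)) * (\<Sum>k=0..m-1. Kr N p k x * Kr N p k (y + real i) / knorm N p k)
       = (Kr N p m x * Kr N p (m-1) (y + real i) - Kr N p (m-1) x * Kr N p m (y + real i)) / h"
      unfolding h_def by (rule CD[OF assms(1-4)])
    note e = this
    have "(\<Sum>k=0..m-1. Kr N p k x * Kr N p k (y + real i) / knorm N p k)
       = (Kr N p m x * Kr N p (m-1) (y + real i) - Kr N p (m-1) x * Kr N p m (y + real i)) / h / (x - (y + real i))"
      unfolding e[symmetric] using nz by simp
    then show "(\<Sum>k=0..m-1. Kr N p k x / knorm N p k * Kr N p k (y + real i)) =
      Kr N p m x / h * (Kr N p (m-1) (y + real i) / (x - (y + real i))) -
      Kr N p (m-1) x / h * (Kr N p m (y + real i) / (x - (y + real i)))"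
      by (simp add: divide_divide_eq_left times_divide_times_eq diff_divide_distrib mult.commute)
  qed
  also have "\<dots> = (Kr N p m x / h) * fdiff j (\<lambda>t. Kr N p (m-1) t / (x - t)) y - (Kr N p (m-1) x / h) * fdiff j (\<lambda>t. Kr N p m t / (x - t)) y"
    unfolding fdiff_diff fdiff_cmul ..
  also have "\<dots> = An N p j m x y * Kr N p m x + Bn N p j m x y * Kr N p (m-1) x"
  proof -
    have q1: "fdiff j (\<lambda>t. Kr N p (m-1) t / (x - t)) y = fact j / ffact (x - y) (j+1) * (\<Sum>k=0..j. fdiff k (Kr N p (m-1)) y / fact k * ffact (x - y) k)"
      by (rule fdiff_quot[OF assms(5)])
    have q2: "fdiff j (\<lambda>t. Kr N p m t / (x - t)) y = fact j / ffact (x - y) (j+1) * (\<Sum>k=0..j. fdiff k (Kr N p m) y / fact k * ffact (x - y) k)"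
      by (rule fdiff_quot[OF assms(5)])
    show ?thesis unfolding q1 q2 An_def Bn_def h_def
      by (simp add: algebra_simps)
  qed
  finally show ?thesis .
qed

lemma KS_conn:
  assumes "1 \<le> m" "m \<le> N" "0 < p" "p < 1" "0 \<le> lam" "0 \<le> mu"
    "\<And>i. i \<le> j \<Longrightarrow> x - real i \<noteq> 0" "\<And>i. i \<le> j \<Longrightarrow> x - real N - real i \<noteq> 0"
  shows "poly (KS N p lam mu j m) x = C1 N p lam mu j m x * Kr N p m x + D1 N p lam mu j m x * Kr N p (m-1) x"
proof -
  have k0: "kerf N p j m 0 x = An N p j m x 0 * Kr N p m x + Bn N p j m x 0 * Kr N p (m-1) x"
    by (rule kerf_AB[OF assms(1-4)]) (use assms(7) in simp)
  have kN: "kerf N p j m (real N) x = An N p j m x (real N) * Kr N p m x + Bn N p j m x (real N) * Kr N p (m-1) x"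
    by (rule kerf_AB[OF assms(1-4)]) (use assms(8) in simp)
  show ?thesis unfolding KS_repr[OF assms(1-6)] k0 kN C1_def D1_def by (simp add: algebra_simps)
qed


lemma Kr_down2:
  assumes "2 \<le> m" "m \<le> N" "0 < p" "p < 1"
  shows "Kr N p (m-2) x = (x * Kr N p (m-1) x - Kr N p m x - alpha N p (m-1) * Kr N p (m-1) x) / beta N p (m-1)"
proof -
  have bz: "beta N p (m-1) \<noteq> 0" using beta_nz[of "m-1" N p] assms by simp
  have "x * Kr N p (m-1) x = Kr N p (Suc (m-1)) x + alpha N p (m-1) * Kr N p (m-1) x + beta N p (m-1) * Kr N p (m-1-1) x"
    by (rule Kr_rec) (use assms in auto)
  moreover have "Suc (m-1) = m" "m - 1 - 1 = m - 2" using assms by auto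
  ultimately have "beta N p (m-1) * Kr N p (m-2) x = x * Kr N p (m-1) x - Kr N p m x - alpha N p (m-1) * Kr N p (m-1) x"
    by simp
  then show ?thesis using bz by (simp add: field_simps)
qed

lemma nabla_conn:
  assumes "2 \<le> m" "m \<le> N" "0 < p" "p < 1" "0 \<le> lam" "0 \<le> mu"
    "\<And>i. i \<le> j \<Longrightarrow> x - real i \<noteq> 0" "\<And>i. i \<le> j \<Longrightarrow> x - real N - real i \<noteq> 0"
    "\<And>i. i \<le> j \<Longrightarrow> x - 1 - real i \<noteq> 0" "\<And>i. i \<le> j \<Longrightarrow> x - 1 - real N - real i \<noteq> 0"
  shows "x * (poly (KS N p lam mu j m) x - poly (KS N p lam mu j m) (x-1)) = E1 N p lam mu j m x * Kr N p m x + F1 N p lam mu j m x * Kr N p (m-1) x"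
proof -
  have p0: "p \<noteq> 0" using assms by simp
  have m1: "1 \<le> m" using assms by simp
  have c0: "poly (KS N p lam mu j m) x = C1 N p lam mu j m x * Kr N p m x + D1 N p lam mu j m x * Kr N p (m-1) x"
    by (rule KS_conn[OF m1 assms(2-6)]) (use assms(7,8) in auto)
  have c1: "poly (KS N p lam mu j m) (x-1) = C1 N p lam mu j m (x-1) * Kr N p m (x-1) + D1 N p lam mu j m (x-1) * Kr N p (m-1) (x-1)"
    by (rule KS_conn[OF m1 assms(2-6)]) (use assms(9,10) in auto)
  have l0: "x * (Kr N p m x - Kr N p m (x-1)) = real m * Kr N p m x + real m * p * (real N - real m + 1) * Kr N p (m-1) x"
    by (rule Kr_lower) (use assms in auto)
  have l1: "x * (Kr N p (m-1) x - Kr N p (m-1) (x-1)) = real (m-1) * Kr N p (m-1) x + real (m-1) * p * (real N - real (m-1) + 1) * Kr N p (m-1-1) x"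
    by (rule Kr_lower) (use assms in auto)
  have mm: "m - 1 - 1 = m - 2" "real (m-1) = real m - 1" using assms by auto
  have bz: "beta N p (m-1) \<noteq> 0" using beta_nz[of "m-1" N p] assms by simp
  define K0 where "K0 = Kr N p m x"
  define K1 where "K1 = Kr N p (m-1) x"
  define K0' where "K0' = Kr N p m (x-1)"
  define K1' where "K1' = Kr N p (m-1) (x-1)"
  define K2 where "K2 = Kr N p (m-2) x"
  define c where "c = C1 N p lam mu j m x"
  define c' where "c' = C1 N p lam mu j m (x-1)"
  define d where "d = D1 N p lam mu j m x"
  define d' where "d' = D1 N p lam mu j m (x-1)"
  define B where "B = beta N p (m-1)"
  define A where "A = alpha N p (m-1)"
  have k2: "K2 = (x * K1 - K0 - A * K1) / B" unfolding K2_def K1_def K0_def A_def B_def by (rule Kr_down2[OF assms(1-4)])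
  have l0': "x * K0' = x * K0 - real m * K0 - real m * p * (real N - real m + 1) * K1"
    using l0 unfolding K0_def K0'_def K1_def by (simp add: algebra_simps)
  have l1': "x * K1' = x * K1 - (real m - 1) * K1 - (real m - 1) * p * (real N - real m + 2) * K2"
    using l1 unfolding K1_def K1'_def K2_def mm by (simp add: algebra_simps)
  have "x * (poly (KS N p lam mu j m) x - poly (KS N p lam mu j m) (x-1))
     = x * (c * K0 + d * K1 - (c' * K0' + d' * K1'))"
    unfolding c0 c1 c_def d_def c'_def d'_def K0_def K1_def K0'_def K1'_def by simp
  also have "\<dots> = x * (c - c') * K0 + c' * (x * K0 - x * K0') + x * (d - d') * K1 + d' * (x * K1 - x * K1')"
    by (simp add: algebra_simps)
  also have "\<dots> = x * (c - c') * K0 + c' * (real m * K0 + real m * p * (real N - real m + 1) * K1)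
      + x * (d - d') * K1 + d' * ((real m - 1) * K1 + (real m - 1) * p * (real N - real m + 2) * ((x * K1 - K0 - A * K1) / B))"
    unfolding l0' l1' k2 by (simp add: algebra_simps)
  also have "\<dots> = E1 N p lam mu j m x * Kr N p m x + F1 N p lam mu j m x * Kr N p (m-1) x"
    unfolding E1_def F1_def bnabla_def c_def[symmetric] c'_def[symmetric] d_def[symmetric] d'_def[symmetric]
      A_def[symmetric] B_def[symmetric] K0_def[symmetric] K1_def[symmetric]
    using bz unfolding B_def[symmetric] by (simp add: field_simps)
  finally show ?thesis .
qed

theorem mainTheorem6:
  fixes N n j :: nat and p lam mu :: real
  assumes "0 < p" and "p < 1" and "0 < lam" and "0 < mu"
    and "3 \<le> n" and "n \<le> N"
  shows "\<exists>S :: real set. finite S \<and> (\<forall>x. x \<notin> S \<longrightarrow>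
      Theta N p lam mu j n x * bnabla (poly (KS N p lam mu j n)) x
        + Lam N p lam mu j n x 2 1 * poly (KS N p lam mu j n) x
      = Lam N p lam mu j n x 1 1 * poly (KS N p lam mu j (n - 1)) x
    \<and> Theta N p lam mu j n x * bnabla (poly (KS N p lam mu j (n - 1))) x
        + Lam N p lam mu j n x 1 2 * poly (KS N p lam mu j (n - 1)) x
      = Lam N p lam mu j n x 2 2 * poly (KS N p lam mu j n) x)"
proof (intro exI conjI allI impI)
  show "finite (real ` {0..N+j+1})" by simp
next
  fix x assume xS: "x \<notin> real ` {0..N+j+1}"
  have h7: "\<And>i. i \<le> j \<Longrightarrow> x - real i \<noteq> 0"
  proof
    fix i assume i: "i \<le> j" and h: "x - real i = 0"
    then have "x = real (i)" by simp
    moreover have "real (i) \<in> real ` {0..N+j+1}" using i by (intro imageI) auto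
    ultimately show False using xS by simp
  qed
  have h8: "\<And>i. i \<le> j \<Longrightarrow> x - real N - real i \<noteq> 0"
  proof
    fix i assume i: "i \<le> j" and h: "x - real N - real i = 0"
    then have "x = real (N + i)" by simp
    moreover have "real (N + i) \<in> real ` {0..N+j+1}" using i by (intro imageI) auto
    ultimately show False using xS by simp
  qed
  have h9: "\<And>i. i \<le> j \<Longrightarrow> x - 1 - real i \<noteq> 0"
  proof
    fix i assume i: "i \<le> j" and h: "x - 1 - real i = 0"
    then have "x = real (Suc i)" by simp
    moreover have "real (Suc i) \<in> real ` {0..N+j+1}" using i by (intro imageI) auto
    ultimately show False using xS by simp
  qed
  have h10: "\<And>i. i \<le> j \<Longrightarrow> x - 1 - real N - real i \<noteq> 0"
  proof
    fix i assume i: "i \<le> j" and h: "x - 1 - real N - real i = 0"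
    then have "x = real (Suc (N + i))" by simp
    moreover have "real (Suc (N + i)) \<in> real ` {0..N+j+1}" using i by (intro imageI) auto
    ultimately show False using xS by simp
  qed
  have lam0: "0 \<le> lam" and mu0: "0 \<le> mu" using assms by auto
  have n1: "1 \<le> n" "2 \<le> n" "2 \<le> n - 1" "n - 1 \<le> N" "1 \<le> n - 1" using assms by auto
  have nn: "n - 1 - 1 = n - 2" by simp
  define P where "P = poly (KS N p lam mu j n)"
  define Q where "Q = poly (KS N p lam mu j (n-1))"
  define K where "K = Kr N p n x"
  define L where "L = Kr N p (n-1) x"
  define M where "M = Kr N p (n-2) x"
  define A where "A = alpha N p (n-1)"
  define B where "B = beta N p (n-1)"
  have bz: "B \<noteq> 0" unfolding B_def using beta_nz[of "n-1" N p] assms by simp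
  have eM: "M = (x * L - K - A * L) / B" unfolding M_def L_def K_def A_def B_def
    by (rule Kr_down2) (use assms in auto)
  have eP: "P x = C1 N p lam mu j n x * K + D1 N p lam mu j n x * L"
    unfolding P_def K_def L_def by (rule KS_conn[OF n1(1) assms(6,1,2) lam0 mu0 h7 h8])
  have eQ0: "Q x = C1 N p lam mu j (n-1) x * L + D1 N p lam mu j (n-1) x * M"
    unfolding Q_def L_def M_def nn[symmetric] by (rule KS_conn[OF n1(5) n1(4) assms(1,2) lam0 mu0 h7 h8])
  have nP: "x * (P x - P (x-1)) = E1 N p lam mu j n x * K + F1 N p lam mu j n x * L"
    unfolding P_def K_def L_def by (rule nabla_conn[OF n1(2) assms(6,1,2) lam0 mu0 h7 h8 h9 h10])
  have nQ0: "x * (Q x - Q (x-1)) = E1 N p lam mu j (n-1) x * L + F1 N p lam mu j (n-1) x * M"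
    unfolding Q_def L_def M_def nn[symmetric] by (rule nabla_conn[OF n1(3) n1(4) assms(1,2) lam0 mu0 h7 h8 h9 h10])
  define c1 where "c1 = C1 N p lam mu j n x"
  define d1 where "d1 = D1 N p lam mu j n x"
  define c2 where "c2 = C2 N p lam mu j n x"
  define d2 where "d2 = D2 N p lam mu j n x"
  define e1 where "e1 = E1 N p lam mu j n x"
  define f1 where "f1 = F1 N p lam mu j n x"
  define e2 where "e2 = E2 N p lam mu j n x"
  define f2 where "f2 = F2 N p lam mu j n x"
  have eQ: "Q x = c2 * K + d2 * L"
    unfolding eQ0 eM c2_def d2_def C2_def D2_def A_def[symmetric] B_def[symmetric]
    using bz by (simp add: field_simps)
  have nQ: "x * (Q x - Q (x-1)) = e2 * K + f2 * L"
    unfolding nQ0 eM e2_def f2_def E2_def F2_def A_def[symmetric] B_def[symmetric]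
    using bz by (simp add: field_simps)
  have eP': "P x = c1 * K + d1 * L" unfolding eP c1_def d1_def ..
  have nP': "x * (P x - P (x-1)) = e1 * K + f1 * L" unfolding nP e1_def f1_def ..
  have Th: "Theta N p lam mu j n x = x * (c1 * d2 - c2 * d1)" unfolding Theta_def c1_def d1_def c2_def d2_def ..
  have L21: "Lam N p lam mu j n x 2 1 = - (e1 * d2 - f1 * c2)"
    unfolding Lam_def Cf_def Df_def Ef_def Ff_def e1_def d2_def f1_def c2_def by simp
  have L11: "Lam N p lam mu j n x 1 1 = - (e1 * d1 - f1 * c1)"
    unfolding Lam_def Cf_def Df_def Ef_def Ff_def e1_def d1_def f1_def c1_def by simp
  have L12: "Lam N p lam mu j n x 1 2 = e2 * d1 - f2 * c1"
    unfolding Lam_def Cf_def Df_def Ef_def Ff_def e2_def d1_def f2_def c1_def by simp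
  have L22: "Lam N p lam mu j n x 2 2 = e2 * d2 - f2 * c2"
    unfolding Lam_def Cf_def Df_def Ef_def Ff_def e2_def d2_def f2_def c2_def by simp
  have T1: "Theta N p lam mu j n x * bnabla P x = (c1 * d2 - c2 * d1) * (x * (P x - P (x-1)))"
    unfolding Th bnabla_def by (simp add: algebra_simps)
  have T2: "Theta N p lam mu j n x * bnabla Q x = (c1 * d2 - c2 * d1) * (x * (Q x - Q (x-1)))"
    unfolding Th bnabla_def by (simp add: algebra_simps)
  show "Theta N p lam mu j n x * bnabla (poly (KS N p lam mu j n)) x
        + Lam N p lam mu j n x 2 1 * poly (KS N p lam mu j n) x
      = Lam N p lam mu j n x 1 1 * poly (KS N p lam mu j (n - 1)) x"
    unfolding P_def[symmetric] Q_def[symmetric] T1 L21 L11 unfolding nP' unfolding eP' eQ by algebra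
  show "Theta N p lam mu j n x * bnabla (poly (KS N p lam mu j (n - 1))) x
        + Lam N p lam mu j n x 1 2 * poly (KS N p lam mu j (n - 1)) x
      = Lam N p lam mu j n x 2 2 * poly (KS N p lam mu j n) x"
    unfolding P_def[symmetric] Q_def[symmetric] T2 L12 L22 unfolding nQ unfolding eP' eQ by algebra
qed

end
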